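(* Let $\alpha\geq 1$. Then: (1) $S_n$ has the maximum value of $\chi_\alpha$ among all $n$-vertex trees; (2) $S_n^+$ has the maximum value of $\chi_\alpha$ among all $n$-vertex unicyclic graphs; (3) $B_1$ has the maximum value of $\chi_\alpha$ among all $n$-vertex bicyclic graphs; (4) for $n\geq 5$, the maximum value of $\chi_\alpha$ among all $n$-vertex tricyclic graphs is attained by $G_4$ or $G_5$; more precisely, $\chi_\alpha(G_4)<\chi_\alpha(G_5)$ for $1<\alpha<2$, $\chi_\alpha(G_4)>\chi_\alpha(G_5)$ for $\alpha>2$, and $\chi_\alpha(G_4)=\chi_\alpha(G_5)$ for $\alpha\in\{1,2\}$; (5) for $n\geq 6$, $H_4$ has the maximum value of $\chi_\alpha$ among all $n$-vertex tetracyclic graphs, and for $n=5$, $H_5$ has the maximum value of $\chi_\alpha$ among all $5$-vertex tetracyclic graphs.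
   Context: All graphs are finite, simple, undirected and connected. A connected graph with $n$ vertices and $m$ edges is a tree, unicyclic, bicyclic, tricyclic, tetracyclic graph if $m=n-1,n,n+1,n+2,n+3$ respectively. The general sum-connectivity index is $\chi_\alpha(G)=\sum_{uv\in E(G)}(d_u+d_v)^\alpha$, $d_u$ the degree of $u$. $S_n$ is the star on $n$ vertices (one center adjacent to $n-1$ leaves). The following graphs are all obtained from $S_n$ by adding edges between leaves: $S_n^+$: add one edge; $B_1$: add two edges sharing a common leaf (i.e. a path $v_1v_2v_3$ on three leaves); $G_4$: join one leaf to three other leaves (requires $n\ge5$); $G_5$: add the three edges of a triangle on three leaves; $H_4$: join one leaf to four other leaves (requires $n\ge 6$); $H_5$: add on four leaves $v_1,v_2,v_3,v_4$ the edges $v_1v_2,v_2v_3,v_3v_1,v_1v_4$ (a triangle with a pendant edge). Statements (1)–(3) are for those $n$ for which the respective graphs exist. *)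

theory Defs
  imports Complex_Main
begin

definition simple_graph :: "nat \<Rightarrow> nat set set \<Rightarrow> bool" where
  "simple_graph n E \<longleftrightarrow> (\<forall>e\<in>E. \<exists>u v. e = {u, v} \<and> u \<noteq> v \<and> u < n \<and> v < n)"

definition adj_rel :: "nat set set \<Rightarrow> (nat \<times> nat) set" where
  "adj_rel E = {(u, v). {u, v} \<in> E}"

definition connected_graph :: "nat \<Rightarrow> nat set set \<Rightarrow> bool" where
  "connected_graph n E \<longleftrightarrow> (\<forall>u<n. \<forall>v<n. (u, v) \<in> (adj_rel E)\<^sup>*)"

definition conn_k_cyclic :: "nat \<Rightarrow> nat \<Rightarrow> nat set set \<Rightarrow> bool" where
  "conn_k_cyclic k n E \<longleftrightarrow> simple_graph n E \<and> connected_graph n E \<and> card E + 1 = n + k"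

abbreviation "is_tree \<equiv> conn_k_cyclic 0"
abbreviation "unicyclic \<equiv> conn_k_cyclic 1"
abbreviation "bicyclic \<equiv> conn_k_cyclic 2"
abbreviation "tricyclic \<equiv> conn_k_cyclic 3"
abbreviation "tetracyclic \<equiv> conn_k_cyclic 4"

definition deg :: "nat set set \<Rightarrow> nat \<Rightarrow> nat" where
  "deg E v = card {e \<in> E. v \<in> e}"

definition chi :: "real \<Rightarrow> nat set set \<Rightarrow> real" where
  "chi \<alpha> E = (\<Sum>e\<in>E. (real (\<Sum>v\<in>e. deg E v)) powr \<alpha>)"

definition is_max :: "real \<Rightarrow> (nat set set \<Rightarrow> bool) \<Rightarrow> nat set set \<Rightarrow> bool" where
  "is_max \<alpha> P E \<longleftrightarrow> P E \<and> (\<forall>E'. P E' \<longrightarrow> chi \<alpha> E' \<le> chi \<alpha> E)"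

definition star :: "nat \<Rightarrow> nat set set" where
  "star n = {{0, i} | i. 0 < i \<and> i < n}"

definition star_plus :: "nat \<Rightarrow> nat set set" where
  "star_plus n = star n \<union> {{1, 2}}"

definition B1 :: "nat \<Rightarrow> nat set set" where
  "B1 n = star n \<union> {{1, 2}, {2, 3}}"

definition G4 :: "nat \<Rightarrow> nat set set" where
  "G4 n = star n \<union> {{1, 2}, {1, 3}, {1, 4}}"

definition G5 :: "nat \<Rightarrow> nat set set" where
  "G5 n = star n \<union> {{1, 2}, {2, 3}, {3, 1}}"

definition H4 :: "nat \<Rightarrow> nat set set" where
  "H4 n = star n \<union> {{1, 2}, {1, 3}, {1, 4}, {1, 5}}"

definition H5 :: "nat \<Rightarrow> nat set set" where
  "H5 n = star n \<union> {{1, 2}, {2, 3}, {3, 1}, {1, 4}}"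

end

theory Submission
  imports Defs "HOL-Analysis.Analysis"
begin

definition pw :: "real \<Rightarrow> nat \<Rightarrow> real" where
  "pw a x = real x powr a"

lemma pw_mono: "0 \<le> a \<Longrightarrow> x \<le> y \<Longrightarrow> pw a x \<le> pw a y"
  unfolding pw_def by (intro powr_mono2) auto

lemma pw_pair:
  assumes a: "1 \<le> a" and pos: "0 < b2" and s: "a1 + b1 = a2 + b2" and h1: "a1 \<le> a2" and h2: "b1 \<le> a2"
  shows "pw a a1 + pw a b1 \<le> pw a a2 + pw a b2"
proof (cases "a2 = b2")
  case True
  then have "a1 = a2" "b1 = a2" using s h1 h2 by auto
  then show ?thesis using True by simp
next
  case False
  have cv: "convex_on {0<..} (\<lambda>x::real. x powr a)" using powr_convex a by auto
  have lt: "b2 < a2" using s h1 h2 False by linarith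
  define t where "t = (real a1 - real b2) / (real a2 - real b2)"
  have b2a1: "b2 \<le> a1" using s h2 by linarith
  have t0: "0 \<le> t" "t \<le> 1" using lt b2a1 h1 unfolding t_def by (auto simp: field_simps)
  have tt: "t * (real a2 - real b2) = real a1 - real b2"
    using lt unfolding t_def by simp
  have e1: "real a1 = (1 - t) * real b2 + t * real a2"
    using tt by (simp add: algebra_simps)
  have e2: "real b1 = (1 - (1 - t)) * real b2 + (1 - t) * real a2"
  proof -
    have "real b1 = real a2 + real b2 - real a1" using s by (metis add_diff_cancel_left' of_nat_add add.commute)
    then show ?thesis using e1 by (simp add: algebra_simps)
  qed
  have p1: "real b2 \<in> {0<..}" "real a2 \<in> {0<..}" using pos lt by auto
  have c1: "real a1 powr a \<le> (1 - t) * real b2 powr a + t * real a2 powr a"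
    using convex_onD[OF cv, of t "real b2" "real a2"] t0 p1 e1 by simp
  have c2: "real b1 powr a \<le> (1 - (1 - t)) * real b2 powr a + (1 - t) * real a2 powr a"
    using convex_onD[OF cv, of "1 - t" "real b2" "real a2"] t0 p1 e2 by simp
  show ?thesis unfolding pw_def using c1 c2 by (simp add: algebra_simps)
qed

lemma pw_D_mono:
  assumes "1 \<le> a" "0 < m"
  shows "pw a (m+1) - pw a m \<le> pw a (m+2) - pw a (m+1)"
  using pw_pair[OF assms(1) assms(2), of "m+1" "m+1" "m+2"] by simp

definition d1 :: "(real \<Rightarrow> real) \<Rightarrow> real \<Rightarrow> real" where
  "d1 g x = g (x + 1) - g x"

lemma mvt1:
  assumes "\<And>s. s > 0 \<Longrightarrow> (g has_real_derivative g' s) (at s)" "x > 0"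
  shows "\<exists>\<xi>. x < \<xi> \<and> \<xi> < x + 1 \<and> d1 g x = g' \<xi>"
proof -
  have "\<exists>z. x < z \<and> z < x + 1 \<and> g (x+1) - g x = (x + 1 - x) * g' z"
    by (rule MVT2) (use assms in auto)
  then show ?thesis unfolding d1_def by auto
qed

lemma d1_deriv:
  assumes "\<And>s. s > 0 \<Longrightarrow> (g has_real_derivative g' s) (at s)" "s > 0"
  shows "(d1 g has_real_derivative d1 g' s) (at s)"
proof -
  have "((\<lambda>x. g (x + 1)) has_real_derivative g' (s + 1)) (at s)"
    using assms DERIV_shift[of g "g' (s+1)" s 1] by auto
  then have "((\<lambda>x. g (x + 1) - g x) has_real_derivative g' (s + 1) - g' s) (at s)"
    using assms by (intro DERIV_diff) auto
  then show ?thesis unfolding d1_def[abs_def] by simp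
qed

definition f0 :: "real \<Rightarrow> real \<Rightarrow> real" where "f0 a x = x powr a"
definition f1 :: "real \<Rightarrow> real \<Rightarrow> real" where "f1 a x = a * x powr (a - 1)"
definition f2 :: "real \<Rightarrow> real \<Rightarrow> real" where "f2 a x = a * (a - 1) * x powr (a - 2)"
definition f3 :: "real \<Rightarrow> real \<Rightarrow> real" where "f3 a x = a * (a - 1) * (a - 2) * x powr (a - 3)"

lemma der0: "s > 0 \<Longrightarrow> (f0 a has_real_derivative f1 a s) (at s)"
  unfolding f0_def[abs_def] f1_def using has_real_derivative_powr by blast

lemma der1: "s > 0 \<Longrightarrow> (f1 a has_real_derivative f2 a s) (at s)"
proof -
  assume "s > 0"
  then have "((\<lambda>z. z powr (a - 1)) has_real_derivative (a - 1) * s powr (a - 1 - 1)) (at s)"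
    using has_real_derivative_powr by blast
  then have "((\<lambda>z. a * z powr (a - 1)) has_real_derivative a * ((a - 1) * s powr (a - 1 - 1))) (at s)"
    by (rule DERIV_cmult)
  then show ?thesis unfolding f1_def[abs_def] f2_def by (simp add: algebra_simps)
qed

lemma der2: "s > 0 \<Longrightarrow> (f2 a has_real_derivative f3 a s) (at s)"
proof -
  assume "s > 0"
  then have "((\<lambda>z. z powr (a - 2)) has_real_derivative (a - 2) * s powr (a - 2 - 1)) (at s)"
    using has_real_derivative_powr by blast
  then have "((\<lambda>z. (a * (a - 1)) * z powr (a - 2)) has_real_derivative (a * (a - 1)) * ((a - 2) * s powr (a - 2 - 1))) (at s)"
    by (rule DERIV_cmult)
  then show ?thesis unfolding f2_def[abs_def] f3_def by (simp add: algebra_simps)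
qed

lemma delta2:
  assumes "x > 0"
  shows "\<exists>\<xi>. x < \<xi> \<and> \<xi> < x + 2 \<and> f0 a (x+2) - 2 * f0 a (x+1) + f0 a x = f2 a \<xi>"
proof -
  obtain \<xi>1 where x1: "x < \<xi>1" "\<xi>1 < x + 1" "d1 (d1 (f0 a)) x = d1 (f1 a) \<xi>1"
    using mvt1[of "d1 (f0 a)" "d1 (f1 a)" x] d1_deriv[of "f0 a" "f1 a"] der0 assms by blast
  obtain \<xi>2 where x2: "\<xi>1 < \<xi>2" "\<xi>2 < \<xi>1 + 1" "d1 (f1 a) \<xi>1 = f2 a \<xi>2"
    using mvt1[of "f1 a" "f2 a" \<xi>1] der1 x1 assms by auto
  have "d1 (d1 (f0 a)) x = f0 a (x+2) - 2 * f0 a (x+1) + f0 a x"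
    unfolding d1_def by (simp add: add.assoc)
  then show ?thesis using x1 x2 by (intro exI[of _ \<xi>2]) auto
qed

lemma delta3:
  assumes "x > 0"
  shows "\<exists>\<xi>. x < \<xi> \<and> f0 a (x+3) - 3 * f0 a (x+2) + 3 * f0 a (x+1) - f0 a x = f3 a \<xi>"
proof -
  have dd: "s > 0 \<Longrightarrow> (d1 (d1 (f0 a)) has_real_derivative d1 (d1 (f1 a)) s) (at s)" for s
    by (rule d1_deriv[of "d1 (f0 a)"]) (auto intro: d1_deriv der0)
  obtain \<xi>1 where x1: "x < \<xi>1" "d1 (d1 (d1 (f0 a))) x = d1 (d1 (f1 a)) \<xi>1"
    using mvt1[of "d1 (d1 (f0 a))" "d1 (d1 (f1 a))" x] dd assms by blast
  obtain \<xi>2 where x2: "\<xi>1 < \<xi>2" "d1 (d1 (f1 a)) \<xi>1 = d1 (f2 a) \<xi>2"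
    using mvt1[of "d1 (f1 a)" "d1 (f2 a)" \<xi>1] d1_deriv[of "f1 a" "f2 a"] der1 x1 assms by auto
  obtain \<xi>3 where x3: "\<xi>2 < \<xi>3" "d1 (f2 a) \<xi>2 = f3 a \<xi>3"
    using mvt1[of "f2 a" "f3 a" \<xi>2] der2 x1 x2 assms by auto
  have "d1 (d1 (d1 (f0 a))) x = f0 a (x+3) - 3 * f0 a (x+2) + 3 * f0 a (x+1) - f0 a x"
    unfolding d1_def by (simp add: add.assoc algebra_simps)
  then show ?thesis using x1 x2 x3 by (intro exI[of _ \<xi>3]) auto
qed

lemma pw_f0: "pw a k = f0 a (real k)" unfolding pw_def f0_def by simp

lemma RD4:
  assumes a: "1 \<le> a" and n: "4 \<le> n"
  shows "2 * (pw a (n+2) - pw a (n+1)) \<le> pw a (n+4) - pw a (n+3) + (pw a (n+1) - pw a n)"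
proof -
  define x where "x = real n"
  have x4: "4 \<le> x" using n unfolding x_def by simp
  obtain z0 where z0: "x < z0" "z0 < x + 2" "f0 a (x+2) - 2 * f0 a (x+1) + f0 a x = f2 a z0"
    using delta2[of x a] x4 by auto
  obtain z1 where z1: "x+1 < z1" "z1 < x+1 + 2" "f0 a (x+1+2) - 2 * f0 a (x+1+1) + f0 a (x+1) = f2 a z1"
    using delta2[of "x+1" a] x4 by auto
  obtain z2 where z2: "x+2 < z2" "z2 < x+2 + 2" "f0 a (x+2+2) - 2 * f0 a (x+2+1) + f0 a (x+2) = f2 a z2"
    using delta2[of "x+2" a] x4 by auto
  have key: "f2 a z0 \<le> f2 a z1 + f2 a z2"
  proof -
    have c: "0 \<le> a * (a - 1)" using a by simp
    have p0: "0 < z0" "0 < z1" "0 < z2" using z0 z1 z2 x4 by auto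
    show ?thesis
    proof (cases "2 \<le> a")
      case True
      have "z0 powr (a-2) \<le> z2 powr (a-2)" using True z0 z2 p0 by (intro powr_mono2) auto
      moreover have "0 \<le> z1 powr (a-2)" by simp
      ultimately have "z0 powr (a-2) \<le> z1 powr (a-2) + z2 powr (a-2)" by linarith
      then show ?thesis unfolding f2_def using c
        by (metis distrib_left mult_left_mono)
    next
      case False
      have m0: "z0 powr (a-2) \<le> x powr (a-2)" using False z0 x4 by (intro powr_mono2') auto
      have m1: "(x+4) powr (a-2) \<le> z1 powr (a-2)" using False z1 p0 by (intro powr_mono2') auto
      have m2: "(x+4) powr (a-2) \<le> z2 powr (a-2)" using False z2 p0 by (intro powr_mono2') auto
      have m3: "(2*x) powr (a-2) \<le> (x+4) powr (a-2)" using False x4 by (intro powr_mono2') auto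
      have m4: "(2*x) powr (a-2) = 2 powr (a-2) * x powr (a-2)" using x4 by (simp add: powr_mult)
      have m5: "2 powr (-1) \<le> (2::real) powr (a-2)" using a by (intro powr_mono) auto
      have m6: "(2::real) powr (-1) = 1/2" by (simp add: powr_minus)
      have xp: "0 \<le> x powr (a-2)" by simp
      have "x powr (a-2) \<le> 2 * ((2::real) powr (a-2) * x powr (a-2))"
      proof -
        have "1/2 * x powr (a-2) \<le> 2 powr (a-2) * x powr (a-2)"
          using m5 m6 xp by (intro mult_right_mono) auto
        then show ?thesis by linarith
      qed
      then have "z0 powr (a-2) \<le> z1 powr (a-2) + z2 powr (a-2)" using m0 m1 m2 m3 m4 by linarith
      then show ?thesis unfolding f2_def using c
        by (metis distrib_left mult_left_mono)
    qed
  qed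
  have e: "x+1+2 = x+3" "x+1+1 = x+2" "x+2+2 = x+4" "x+2+1 = x+3" by simp_all
  have r: "pw a (n+4) = f0 a (x+4)" "pw a (n+3) = f0 a (x+3)" "pw a (n+2) = f0 a (x+2)"
       "pw a (n+1) = f0 a (x+1)" "pw a n = f0 a x" unfolding pw_f0 x_def by (simp_all add: add.commute)
  show ?thesis using key z0(3) z1(3) z2(3) unfolding r e by (smt (verit))
qed

lemma RD3:
  assumes n: "1 \<le> n"
  shows "\<exists>z>0. pw a (n+3) - 3 * pw a (n+2) + 3 * pw a (n+1) - pw a n = f3 a z"
proof -
  have r: "pw a (n+3) = f0 a (real n+3)" "pw a (n+2) = f0 a (real n+2)"
       "pw a (n+1) = f0 a (real n+1)" "pw a n = f0 a (real n)" unfolding pw_f0 by (simp_all add: add.commute)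
  have "real n > 0" using n by simp
  then obtain z where "real n < z" "f0 a (real n+3) - 3 * f0 a (real n+2) + 3 * f0 a (real n+1) - f0 a (real n) = f3 a z"
    using delta3[of "real n" a] by blast
  then show ?thesis unfolding r using \<open>real n > 0\<close> by (intro exI[of _ z]) auto
qed

lemma f3_sign:
  assumes "z > 0"
  shows "1 < a \<Longrightarrow> a < 2 \<Longrightarrow> f3 a z < 0" "2 < a \<Longrightarrow> f3 a z > 0" "a = 1 \<or> a = 2 \<Longrightarrow> f3 a z = 0"
proof -
  have p: "z powr (a - 3) > 0" using assms by simp
  show "1 < a \<Longrightarrow> a < 2 \<Longrightarrow> f3 a z < 0" unfolding f3_def using p
    by (simp add: mult_pos_neg mult_neg_pos mult_pos_pos mult_neg_neg)
  show "2 < a \<Longrightarrow> f3 a z > 0" unfolding f3_def using p by simp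
  show "a = 1 \<or> a = 2 \<Longrightarrow> f3 a z = 0" unfolding f3_def by auto
qed

lemma sg_edge: "simple_graph n E \<Longrightarrow> e \<in> E \<Longrightarrow> \<exists>u v. e = {u, v} \<and> u \<noteq> v \<and> u < n \<and> v < n"
  unfolding simple_graph_def by auto

lemma sg_sub: "simple_graph n E \<Longrightarrow> E \<subseteq> Pow {0..<n}"
  unfolding simple_graph_def by auto

lemma sg_finite: "simple_graph n E \<Longrightarrow> finite E"
  using sg_sub by (metis finite_Pow_iff finite_atLeastLessThan finite_subset)

lemma sg_no_single: "simple_graph n E \<Longrightarrow> {u} \<notin> E"
proof
  assume "simple_graph n E" "{u} \<in> E"
  then obtain a b where "{u} = {a, b}" "a \<noteq> b" using sg_edge by blast
  then have "a = u" "b = u" by (metis insertI1 insert_commute singletonD)+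
  then show False using \<open>a \<noteq> b\<close> by simp
qed

lemma sg_card2: "simple_graph n E \<Longrightarrow> e \<in> E \<Longrightarrow> card e = 2"
proof -
  assume "simple_graph n E" "e \<in> E"
  then obtain a b where "e = {a, b}" "a \<noteq> b" using sg_edge by blast
  then show ?thesis by simp
qed

definition nbr :: "nat set set \<Rightarrow> nat \<Rightarrow> nat set" where
  "nbr E v = {u. {v, u} \<in> E}"

lemma nbr_sub: assumes sg: "simple_graph n E" shows "nbr E v \<subseteq> {0..<n}"
proof
  fix u assume "u \<in> nbr E v"
  then have "{v, u} \<in> E" unfolding nbr_def by simp
  then obtain a b where ab: "{v, u} = {a, b}" "a < n" "b < n" using sg_edge[OF sg] by blast
  have "u \<in> {a, b}" using ab(1) by (metis insertI1 insert_commute)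
  then have "u = a \<or> u = b" by simp
  then show "u \<in> {0..<n}" using ab by auto
qed

lemma nbr_finite: assumes "simple_graph n E" shows "finite (nbr E v)"
  using finite_subset[OF nbr_sub[OF assms]] by simp

lemma nbr_not_self: "simple_graph n E \<Longrightarrow> v \<notin> nbr E v"
  unfolding nbr_def using sg_no_single by (metis insert_absorb2 mem_Collect_eq)

lemma inc_eq: "simple_graph n E \<Longrightarrow> {e \<in> E. v \<in> e} = (\<lambda>u. {v, u}) ` nbr E v"
proof (intro equalityI subsetI)
  fix e assume sg: "simple_graph n E" and "e \<in> {e \<in> E. v \<in> e}"
  then have e: "e \<in> E" "v \<in> e" by auto
  then obtain a b where ab: "e = {a, b}" using sg_edge[OF sg] by blast
  show "e \<in> (\<lambda>u. {v, u}) ` nbr E v"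
  proof (cases "v = a")
    case True
    then show ?thesis using e ab unfolding nbr_def by (intro image_eqI[of _ _ b]) auto
  next
    case False
    then have "v = b" using e ab by auto
    then show ?thesis using e ab unfolding nbr_def by (intro image_eqI[of _ _ a]) (auto simp: insert_commute)
  qed
next
  fix e assume "e \<in> (\<lambda>u. {v, u}) ` nbr E v"
  then show "e \<in> {e \<in> E. v \<in> e}" unfolding nbr_def by auto
qed

lemma inj_dbl: "inj_on (\<lambda>u. {v, u::nat}) A"
  by (auto simp: inj_on_def doubleton_eq_iff)

lemma deg_nbr: "simple_graph n E \<Longrightarrow> deg E v = card (nbr E v)"
  unfolding deg_def by (simp add: inc_eq card_image[OF inj_dbl])

lemma sum_pair: "u \<noteq> v \<Longrightarrow> (\<Sum>x\<in>{u, v}. g x) = g u + (g v :: 'b::comm_monoid_add)"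
  by simp

lemma chi_pw: "chi a E = (\<Sum>e\<in>E. pw a (\<Sum>v\<in>e. deg E v))"
  unfolding chi_def pw_def by simp

lemma card_filter_sum: "finite A \<Longrightarrow> card {x \<in> A. P x} = (\<Sum>x\<in>A. if P x then 1 else 0)"
proof -
  assume f: "finite A"
  have "card {x \<in> A. P x} = (\<Sum>x\<in>{x \<in> A. P x}. (1::nat))" by simp
  also have "\<dots> = (\<Sum>x\<in>A. if P x then 1 else 0)" by (rule sum.inter_filter[OF f])
  finally show ?thesis .
qed

lemma handshake:
  assumes "simple_graph n E"
  shows "(\<Sum>v<n. card {e \<in> E. v \<in> e}) = 2 * card E"
proof -
  have fE: "finite E" using sg_finite assms by auto
  have "(\<Sum>v<n. card {e \<in> E. v \<in> e}) = (\<Sum>v<n. \<Sum>e\<in>E. if v \<in> e then 1 else 0)"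
    using fE by (intro sum.cong refl card_filter_sum)
  also have "\<dots> = (\<Sum>e\<in>E. \<Sum>v<n. if v \<in> e then 1 else 0)" by (rule sum.swap)
  also have "\<dots> = (\<Sum>e\<in>E. card {v \<in> {..<n}. v \<in> e})"
    by (intro sum.cong refl card_filter_sum[symmetric]) simp
  also have "\<dots> = (\<Sum>e\<in>E. 2)"
  proof (rule sum.cong[OF refl])
    fix e assume "e \<in> E"
    then obtain u v where uv: "e = {u, v}" "u \<noteq> v" "u < n" "v < n" using sg_edge assms by blast
    then have "{v \<in> {..<n}. v \<in> e} = e" by auto
    then show "card {v \<in> {..<n}. v \<in> e} = 2" using uv by simp
  qed
  finally show ?thesis by simp
qed

lemma dist_two:
  assumes sg: "simple_graph n E" and cn: "connected_graph n E" and w: "w < n"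
    and v: "v < n" "v \<noteq> w" "{w, v} \<notin> E"
  shows "\<exists>y z. {w, y} \<in> E \<and> {y, z} \<in> E \<and> z \<noteq> w \<and> {w, z} \<notin> E"
proof -
  let ?Q = "\<exists>y z. {w, y} \<in> E \<and> {y, z} \<in> E \<and> z \<noteq> w \<and> {w, z} \<notin> E"
  have "(w, v) \<in> (adj_rel E)\<^sup>*" using cn w v unfolding connected_graph_def by auto
  then have "v = w \<or> {w, v} \<in> E \<or> ?Q"
  proof (induction rule: rtrancl_induct)
    case base then show ?case by simp
  next
    case (step a b)
    then have ab: "{a, b} \<in> E" unfolding adj_rel_def by auto
    consider "a = w" | "{w, a} \<in> E" | ?Q using step.IH by blast
    then show ?case
    proof cases
      case 1 then show ?thesis using ab by simp
    next
      case 2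
      show ?thesis
      proof (cases "b = w \<or> {w, b} \<in> E")
        case True then show ?thesis by blast
      next
        case False
        then have "{w, a} \<in> E \<and> {a, b} \<in> E \<and> b \<noteq> w \<and> {w, b} \<notin> E" using 2 ab by simp
        then have ?Q by blast
        then show ?thesis by simp
      qed
    next
      case 3 then show ?thesis by simp
    qed
  qed
  then show ?thesis using v by auto
qed

lemma deg_le_n:
  assumes "simple_graph n E"
  shows "deg E v \<le> n"
proof -
  have "deg E v = card (nbr E v)" using deg_nbr assms by auto
  also have "\<dots> \<le> card {0..<n}" using nbr_sub[OF assms] by (intro card_mono) auto
  finally show ?thesis by simp
qed

lemma edge_nbr: "{v, u} \<in> E \<Longrightarrow> u \<in> nbr E v" unfolding nbr_def by simp

lemma sum_edge_cases:
  assumes sg: "simple_graph n E" and e: "e \<in> E"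
  obtains p q where "e = {p, q}" "p \<noteq> q" "p < n" "q < n"
  using sg_edge[OF sg e] by blast

lemma kel_step:
  assumes a: "1 \<le> \<alpha>" and sg: "simple_graph n E" and cn: "connected_graph n E" and w: "w < n"
    and wy: "{w, y} \<in> E" and yz: "{y, z} \<in> E" and zw: "z \<noteq> w" and wz: "{w, z} \<notin> E"
  shows "\<exists>E'. simple_graph n E' \<and> connected_graph n E' \<and> card E' = card E \<and> deg E w < deg E' w
           \<and> chi \<alpha> E \<le> chi \<alpha> E'"
proof -
  define M where "M = {u. u < n \<and> {y, u} \<in> E \<and> u \<noteq> w \<and> {w, u} \<notin> E}"
  define R where "R = (\<lambda>u. {y, u}) ` M"
  define N where "N = (\<lambda>u. {w, u}) ` M"
  define E' where "E' = (E - R) \<union> N"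
  have fE: "finite E" using sg_finite[OF sg] .
  have wny: "w \<noteq> y" using wy sg_no_single[OF sg, of w] by auto
  have yn: "y < n" using nbr_sub[OF sg, of w] edge_nbr[OF wy] by auto
  have uM: "u \<noteq> y \<and> u \<noteq> w \<and> {y, u} \<in> E \<and> {w, u} \<notin> E \<and> u < n" if "u \<in> M" for u
  proof -
    have "u \<in> nbr E y" using that unfolding M_def by (auto intro: edge_nbr)
    then have "u \<noteq> y" using nbr_not_self[OF sg, of y] by auto
    then show ?thesis using that unfolding M_def by auto
  qed
  have zM: "z \<in> M" unfolding M_def using yz zw wz nbr_sub[OF sg, of y] edge_nbr[OF yz] by auto
  have fM: "finite M" unfolding M_def by auto
  have RE: "R \<subseteq> E" unfolding R_def using uM by auto
  have NE: "N \<inter> E = {}" unfolding N_def using uM by auto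
  have fR: "finite R" using fM unfolding R_def by simp
  have cR: "card R = card M" unfolding R_def by (rule card_image[OF inj_dbl])
  have cN: "card N = card M" unfolding N_def by (rule card_image[OF inj_dbl])
  have fN: "finite N" using fM unfolding N_def by simp
  have cE': "card E' = card E"
  proof -
    have "card E' = card (E - R) + card N" unfolding E'_def
      using NE fE fN by (intro card_Un_disjoint) auto
    also have "card (E - R) = card E - card R" using RE fR by (intro card_Diff_subset) auto
    finally show ?thesis using cR cN card_mono[OF fE RE] by simp
  qed
  have wR: "w \<notin> e" if "e \<in> R" for e using that uM wny unfolding R_def by auto
  have yN: "y \<notin> e" if "e \<in> N" for e using that uM wny unfolding N_def by auto
  have sg': "simple_graph n E'"
    unfolding simple_graph_def
  proof
    fix e assume "e \<in> E'"
    then consider "e \<in> E" | "e \<in> N" unfolding E'_def by auto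
    then show "\<exists>u v. e = {u, v} \<and> u \<noteq> v \<and> u < n \<and> v < n"
    proof cases
      case 1 then show ?thesis using sg_edge[OF sg] by blast
    next
      case 2
      then obtain u where "u \<in> M" "e = {w, u}" unfolding N_def by auto
      then show ?thesis using uM[of u] w by blast
    qed
  qed
  have wyE': "{w, y} \<in> E'" using wy wR unfolding E'_def by auto
  have wuE': "{w, u} \<in> E'" if "u \<in> M" for u using that unfolding E'_def N_def by auto
  have adjE': "(p, q) \<in> adj_rel E'" if "{p, q} \<in> E'" for p q using that unfolding adj_rel_def by simp
  have sub: "adj_rel E \<subseteq> (adj_rel E')\<^sup>*"
  proof
    fix x assume "x \<in> adj_rel E"
    then obtain p q where x: "x = (p, q)" "{p, q} \<in> E" unfolding adj_rel_def by auto
    show "x \<in> (adj_rel E')\<^sup>*"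
    proof (cases "{p, q} \<in> R")
      case False
      then show ?thesis using x adjE'[of p q] unfolding E'_def by auto
    next
      case True
      then obtain u where u: "u \<in> M" "{p, q} = {y, u}" unfolding R_def by auto
      have 1: "(y, w) \<in> adj_rel E'" "(w, y) \<in> adj_rel E'" using adjE'[of y w] adjE'[of w y] wyE'
        by (auto simp: insert_commute)
      have 2: "(u, w) \<in> adj_rel E'" "(w, u) \<in> adj_rel E'" using adjE'[of u w] adjE'[of w u] wuE'[OF u(1)]
        by (auto simp: insert_commute)
      from u(2) have "(p = y \<and> q = u) \<or> (p = u \<and> q = y)" by (auto simp: doubleton_eq_iff)
      then show ?thesis
      proof
        assume "p = y \<and> q = u"
        then show ?thesis using x 1 2 by (meson converse_rtrancl_into_rtrancl r_into_rtrancl)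
      next
        assume "p = u \<and> q = y"
        then show ?thesis using x 1 2 by (meson converse_rtrancl_into_rtrancl r_into_rtrancl)
      qed
    qed
  qed
  have cn': "connected_graph n E'"
    using cn rtrancl_subset_rtrancl[OF sub] unfolding connected_graph_def by blast
  define d where "d = deg E"
  define d' where "d' = deg E'"
  have dw: "d' w = d w + card M"
  proof -
    have "{e \<in> E'. w \<in> e} = {e \<in> E. w \<in> e} \<union> N"
      unfolding E'_def using wR by (auto simp: N_def)
    moreover have "card ({e \<in> E. w \<in> e} \<union> N) = card {e \<in> E. w \<in> e} + card N"
      using NE fE fN by (intro card_Un_disjoint) auto
    ultimately show ?thesis unfolding d_def d'_def deg_def using cN by simp
  qed
  have dy: "d' y + card M = d y"
  proof -
    have "{e \<in> E'. y \<in> e} = {e \<in> E. y \<in> e} - R"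
      unfolding E'_def using yN by auto
    moreover have "R \<subseteq> {e \<in> E. y \<in> e}" using RE unfolding R_def by auto
    moreover have "card ({e \<in> E. y \<in> e} - R) = card {e \<in> E. y \<in> e} - card R"
      using calculation(2) fR by (intro card_Diff_subset) auto
    moreover have "card R \<le> card {e \<in> E. y \<in> e}" using calculation(2) fE by (intro card_mono) auto
    ultimately show ?thesis unfolding d_def d'_def deg_def using cR by simp
  qed
  have dv: "d' v = d v" if "v \<noteq> w" "v \<noteq> y" for v
  proof (cases "v \<in> M")
    case True
    have yvE: "{y, v} \<in> E" "{w, v} \<notin> E" using uM[OF True] by auto
    have "{e \<in> E'. v \<in> e} = insert {w, v} ({e \<in> E. v \<in> e} - {{y, v}})"
    proof (intro equalityI subsetI)
      fix e assume "e \<in> {e \<in> E'. v \<in> e}"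
      then have e: "e \<in> E'" "v \<in> e" by auto
      show "e \<in> insert {w, v} ({e \<in> E. v \<in> e} - {{y, v}})"
      proof (cases "e \<in> N")
        case True
        then obtain u where "u \<in> M" "e = {w, u}" unfolding N_def by auto
        then show ?thesis using e that by auto
      next
        case False
        then have "e \<in> E" "e \<notin> R" using e unfolding E'_def by auto
        moreover have "{y, v} \<in> R" using True unfolding R_def by auto
        ultimately show ?thesis using e by auto
      qed
    next
      fix e assume "e \<in> insert {w, v} ({e \<in> E. v \<in> e} - {{y, v}})"
      then consider "e = {w, v}" | "e \<in> E" "v \<in> e" "e \<noteq> {y, v}" by auto
      then show "e \<in> {e \<in> E'. v \<in> e}"
      proof cases
        case 1 then show ?thesis using wuE'[OF True] by auto
      next
        case 2
        have "e \<notin> R"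
        proof
          assume "e \<in> R"
          then obtain u where "e = {y, u}" unfolding R_def by auto
          then show False using 2 that by auto
        qed
        then show ?thesis using 2 unfolding E'_def by auto
      qed
    qed
    moreover have "card (insert {w, v} ({e \<in> E. v \<in> e} - {{y, v}})) = card ({e \<in> E. v \<in> e} - {{y, v}}) + 1"
      using fE yvE by (subst card_insert_disjoint) auto
    moreover have "card ({e \<in> E. v \<in> e} - {{y, v}}) = card {e \<in> E. v \<in> e} - 1"
      using fE yvE by (subst card_Diff_singleton) auto
    moreover have "card {e \<in> E. v \<in> e} \<ge> 1"
    proof -
      have "{y, v} \<in> {e \<in> E. v \<in> e}" using yvE by simp
      then have "{e \<in> E. v \<in> e} \<noteq> {}" by blast
      then have "card {e \<in> E. v \<in> e} > 0" using fE by (simp add: card_gt_0_iff)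
      then show ?thesis by simp
    qed
    ultimately show ?thesis unfolding d_def d'_def deg_def by simp
  next
    case False
    have "{e \<in> E'. v \<in> e} = {e \<in> E. v \<in> e}"
    proof (intro equalityI subsetI)
      fix e assume "e \<in> {e \<in> E'. v \<in> e}"
      then have e: "e \<in> E'" "v \<in> e" by auto
      have "e \<notin> N"
      proof
        assume "e \<in> N"
        then obtain u where "u \<in> M" "e = {w, u}" unfolding N_def by auto
        then show False using e that False by auto
      qed
      then show "e \<in> {e \<in> E. v \<in> e}" using e unfolding E'_def by auto
    next
      fix e assume "e \<in> {e \<in> E. v \<in> e}"
      then have e: "e \<in> E" "v \<in> e" by auto
      have "e \<notin> R"
      proof
        assume "e \<in> R"
        then obtain u where "u \<in> M" "e = {y, u}" unfolding R_def by auto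
        then show False using e that False by auto
      qed
      then show "e \<in> {e \<in> E'. v \<in> e}" using e unfolding E'_def by auto
    qed
    then show ?thesis unfolding d_def d'_def deg_def by simp
  qed
  have dyw: "d y \<le> d' w"
  proof -
    have "nbr E y \<subseteq> insert w (M \<union> (nbr E w - {y}))"
    proof
      fix u assume u: "u \<in> nbr E y"
      then have yu: "{y, u} \<in> E" unfolding nbr_def by simp
      have un: "u < n" using u nbr_sub[OF sg, of y] by auto
      show "u \<in> insert w (M \<union> (nbr E w - {y}))"
      proof (cases "u = w \<or> {w, u} \<in> E")
        case True
        moreover have "u \<noteq> y" using u nbr_not_self[OF sg] by auto
        ultimately show ?thesis unfolding nbr_def by auto
      next
        case False
        then show ?thesis unfolding M_def using yu un by auto
      qed
    qed
    then have "card (nbr E y) \<le> card (insert w (M \<union> (nbr E w - {y})))"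
      using fM nbr_finite[OF sg] by (intro card_mono) auto
    also have "\<dots> \<le> Suc (card (M \<union> (nbr E w - {y})))" using fM nbr_finite[OF sg, of w] by (simp add: card_insert_if)
    also have "\<dots> \<le> Suc (card M + card (nbr E w - {y}))" using card_Un_le by simp
    also have "card (nbr E w - {y}) = card (nbr E w) - 1"
      using edge_nbr[OF wy] nbr_finite[OF sg] by simp
    also have "card (nbr E w) \<ge> 1"
    proof -
      have "nbr E w \<noteq> {}" using edge_nbr[OF wy] by blast
      then have "card (nbr E w) > 0" using nbr_finite[OF sg] by (simp add: card_gt_0_iff)
      then show ?thesis by simp
    qed
    ultimately show ?thesis unfolding d_def using deg_nbr[OF sg] dw d_def by simp
  qed
  have dpos: "d v \<ge> 1" if "{v, u} \<in> E" for v u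
  proof -
    have "{v, u} \<in> {e \<in> E. v \<in> e}" using that by simp
    then have "{e \<in> E. v \<in> e} \<noteq> {}" by blast
    then have "card {e \<in> E. v \<in> e} > 0" using fE by (simp add: card_gt_0_iff)
    then show ?thesis unfolding d_def deg_def by simp
  qed
  define F where "F e = pw \<alpha> (\<Sum>x\<in>e. d x)" for e
  define F' where "F' e = pw \<alpha> (\<Sum>x\<in>e. d' x)" for e
  have chiE: "chi \<alpha> E = sum F (E - R) + sum F R"
    unfolding chi_pw F_def d_def using sum.subset_diff[OF RE fE] by simp
  have chiE': "chi \<alpha> E' = sum F' (E - R) + sum F' N"
  proof -
    have "chi \<alpha> E' = sum F' E'" unfolding chi_pw F'_def d'_def by simp
    also have "\<dots> = sum F' (E - R) + sum F' N" unfolding E'_def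
      using fE fN NE by (intro sum.union_disjoint) auto
    finally show ?thesis .
  qed
  have sR: "sum F R \<le> sum F' N"
  proof -
    have "sum F R = (\<Sum>u\<in>M. F {y, u})" unfolding R_def by (rule sum.reindex[OF inj_dbl, unfolded comp_def])
    also have "\<dots> \<le> (\<Sum>u\<in>M. F' {w, u})"
    proof (rule sum_mono)
      fix u assume u: "u \<in> M"
      have "F {y, u} = pw \<alpha> (d y + d u)" unfolding F_def using uM[OF u] by simp
      also have "\<dots> \<le> pw \<alpha> (d' w + d' u)" using dv[of u] uM[OF u] dyw a by (intro pw_mono) auto
      also have "\<dots> = F' {w, u}" unfolding F'_def using uM[OF u] by simp
      finally show "F {y, u} \<le> F' {w, u}" .
    qed
    also have "\<dots> = sum F' N" unfolding N_def by (rule sum.reindex[OF inj_dbl, unfolded comp_def, symmetric])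
    finally show ?thesis .
  qed
  define A where "A = nbr E w - {y}"
  define C where "C = {c \<in> A. {y, c} \<in> E}"
  define B1 where "B1 = (\<lambda>a. {w, a}) ` A"
  define B2 where "B2 = (\<lambda>c. {y, c}) ` C"
  define B where "B = E - R"
  have fA: "finite A" unfolding A_def using nbr_finite[OF sg] by simp
  have CA: "C \<subseteq> A" unfolding C_def by auto
  have fC: "finite C" using finite_subset[OF CA fA] .
  have Aprop: "a \<noteq> w \<and> a \<noteq> y \<and> {w, a} \<in> E" if "a \<in> A" for a
    using that nbr_not_self[OF sg, of w] unfolding A_def nbr_def by auto
  have B1B: "B1 \<subseteq> B"
  proof
    fix e assume "e \<in> B1"
    then obtain a where a: "a \<in> A" "e = {w, a}" unfolding B1_def by auto
    have "e \<notin> R" using wR a by auto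
    then show "e \<in> B" using a Aprop unfolding B_def by auto
  qed
  have B2B: "B2 \<subseteq> B"
  proof
    fix e assume "e \<in> B2"
    then obtain c where c: "c \<in> C" "e = {y, c}" unfolding B2_def by auto
    have "e \<notin> R"
    proof
      assume "e \<in> R"
      then obtain u where "u \<in> M" "e = {y, u}" unfolding R_def by auto
      then have "u = c" using c uM by (auto simp: doubleton_eq_iff)
      then show False using \<open>u \<in> M\<close> c Aprop CA uM by auto
    qed
    then show "e \<in> B" using c unfolding B_def C_def by auto
  qed
  have B12: "B1 \<inter> B2 = {}"
  proof -
    { fix e assume "e \<in> B1" "e \<in> B2"
      then obtain a c where "a \<in> A" "e = {w, a}" "c \<in> C" "e = {y, c}" unfolding B1_def B2_def by auto
      then have False using wny Aprop CA by (auto simp: doubleton_eq_iff) }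
    then show ?thesis by blast
  qed
  have fB: "finite B" unfolding B_def using fE by simp
  have rest: "F' e = F e" if e: "e \<in> B" "e \<notin> B1" "e \<notin> B2" for e
  proof -
    obtain p q where pq: "e = {p, q}" "p \<noteq> q" "p < n" "q < n" using sg_edge[OF sg] e unfolding B_def by blast
    have eE: "e \<in> E" "e \<notin> R" using e unfolding B_def by auto
    consider "w \<notin> e" "y \<notin> e" | "w \<in> e" "y \<in> e" | "w \<in> e" "y \<notin> e" | "w \<notin> e" "y \<in> e" by blast
    then show ?thesis
    proof cases
      case 1
      then show ?thesis unfolding F_def F'_def using dv pq by simp
    next
      case 2
      then have "e = {w, y}" using pq wny by auto
      moreover have "d' w + d' y = d w + d y" using dw dy by simp
      ultimately show ?thesis unfolding F_def F'_def using wny by simp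
    next
      case 3
      then obtain a where ea: "e = {w, a}" "a \<noteq> w" using pq by auto
      have "a \<noteq> y" using 3 ea by auto
      moreover have "a \<in> nbr E w" using eE ea by (auto intro: edge_nbr)
      ultimately have "a \<in> A" unfolding A_def by auto
      then have "e \<in> B1" unfolding B1_def using ea by auto
      then show ?thesis using e by simp
    next
      case 4
      then obtain c where ec: "e = {y, c}" "c \<noteq> y" using pq by auto
      have cw: "c \<noteq> w" using 4 ec by auto
      have cn: "c < n" using pq ec by auto
      have "c \<notin> M"
      proof
        assume "c \<in> M" then have "e \<in> R" unfolding R_def using ec by auto
        then show False using eE by simp
      qed
      then have "{w, c} \<in> E" unfolding M_def using cn eE ec cw by auto
      then have "c \<in> A" unfolding A_def using ec by (auto intro: edge_nbr)
      then have "c \<in> C" unfolding C_def using eE ec by auto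
      then have "e \<in> B2" unfolding B2_def using ec by auto
      then show ?thesis using e by simp
    qed
  qed
  have sB: "sum F B \<le> sum F' B"
  proof -
    define \<delta> where "\<delta> e = F' e - F e" for e
    have "sum \<delta> B = sum \<delta> (B1 \<union> B2)"
      using fB B1B B2B rest unfolding \<delta>_def by (intro sum.mono_neutral_right) auto
    also have "\<dots> = sum \<delta> B1 + sum \<delta> B2"
      using fB B1B B2B B12 by (intro sum.union_disjoint) (auto intro: finite_subset)
    also have "sum \<delta> B1 = (\<Sum>a\<in>A. pw \<alpha> (d' w + d a) - pw \<alpha> (d w + d a))"
    proof -
      have "sum \<delta> B1 = (\<Sum>a\<in>A. \<delta> {w, a})" unfolding B1_def by (rule sum.reindex[OF inj_dbl, unfolded comp_def])
      also have "\<dots> = (\<Sum>a\<in>A. pw \<alpha> (d' w + d a) - pw \<alpha> (d w + d a))"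
      proof (intro sum.cong refl)
        fix x assume x: "x \<in> A"
        then have "w \<noteq> x" "x \<noteq> y" using Aprop by auto
        then show "\<delta> {w, x} = pw \<alpha> (d' w + d x) - pw \<alpha> (d w + d x)"
          unfolding \<delta>_def F_def F'_def using dv[of x] by simp
      qed
      finally show ?thesis .
    qed
    also have "sum \<delta> B2 = (\<Sum>c\<in>C. pw \<alpha> (d' y + d c) - pw \<alpha> (d y + d c))"
    proof -
      have "sum \<delta> B2 = (\<Sum>c\<in>C. \<delta> {y, c})" unfolding B2_def by (rule sum.reindex[OF inj_dbl, unfolded comp_def])
      also have "\<dots> = (\<Sum>c\<in>C. pw \<alpha> (d' y + d c) - pw \<alpha> (d y + d c))"
      proof (intro sum.cong refl)
        fix x assume x: "x \<in> C"
        then have "y \<noteq> x" "x \<noteq> w" using Aprop CA by auto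
        then show "\<delta> {y, x} = pw \<alpha> (d' y + d x) - pw \<alpha> (d y + d x)"
          unfolding \<delta>_def F_def F'_def using dv[of x] by simp
      qed
      finally show ?thesis .
    qed
    finally have eq: "sum \<delta> B = (\<Sum>a\<in>A. pw \<alpha> (d' w + d a) - pw \<alpha> (d w + d a))
        + (\<Sum>c\<in>C. pw \<alpha> (d' y + d c) - pw \<alpha> (d y + d c))" .
    have "(\<Sum>c\<in>C. pw \<alpha> (d' w + d c) - pw \<alpha> (d w + d c)) \<le> (\<Sum>a\<in>A. pw \<alpha> (d' w + d a) - pw \<alpha> (d w + d a))"
      using fA CA dw a by (intro sum_mono2) (auto intro!: pw_mono simp: algebra_simps)
    moreover have "0 \<le> (\<Sum>c\<in>C. (pw \<alpha> (d' w + d c) - pw \<alpha> (d w + d c)) + (pw \<alpha> (d' y + d c) - pw \<alpha> (d y + d c)))"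
    proof (rule sum_nonneg)
      fix c assume c: "c \<in> C"
      have yc: "{y, c} \<in> E" using c unfolding C_def by auto
      have "d c \<ge> 1" using dpos[of c y] yc by (simp add: insert_commute)
      then have "pw \<alpha> (d w + d c) + pw \<alpha> (d y + d c) \<le> pw \<alpha> (d' w + d c) + pw \<alpha> (d' y + d c)"
        using dw dy dyw by (intro pw_pair[OF a]) auto
      then show "0 \<le> (pw \<alpha> (d' w + d c) - pw \<alpha> (d w + d c)) + (pw \<alpha> (d' y + d c) - pw \<alpha> (d y + d c))" by simp
    qed
    ultimately have "0 \<le> sum \<delta> B" unfolding eq sum.distrib by linarith
    then show ?thesis unfolding \<delta>_def sum_subtractf by simp
  qed
  have dwlt: "deg E w < deg E' w" using dw zM fM unfolding d_def d'_def
    by (metis add_less_cancel_left card_gt_0_iff empty_iff add.right_neutral)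
  show ?thesis
    using sg' cn' cE' dwlt chiE chiE' sR sB unfolding B_def by (intro exI[of _ E']) auto
qed

lemma reduce:
  assumes a: "1 \<le> \<alpha>"
  shows "simple_graph n E \<Longrightarrow> connected_graph n E \<Longrightarrow> w < n \<Longrightarrow>
    \<exists>E'. simple_graph n E' \<and> card E' = card E \<and> (\<forall>v<n. v \<noteq> w \<longrightarrow> {w, v} \<in> E') \<and> chi \<alpha> E \<le> chi \<alpha> E'"
proof (induction "n - deg E w" arbitrary: E rule: less_induct)
  case less
  show ?case
  proof (cases "\<forall>v<n. v \<noteq> w \<longrightarrow> {w, v} \<in> E")
    case True
    then show ?thesis using less.prems by blast
  next
    case False
    then obtain v where v: "v < n" "v \<noteq> w" "{w, v} \<notin> E" by blast
    obtain y z where yz: "{w, y} \<in> E" "{y, z} \<in> E" "z \<noteq> w" "{w, z} \<notin> E"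
      using dist_two[OF less.prems v] by blast
    obtain E1 where E1: "simple_graph n E1" "connected_graph n E1" "card E1 = card E"
      "deg E w < deg E1 w" "chi \<alpha> E \<le> chi \<alpha> E1"
      using kel_step[OF a less.prems yz] by blast
    have "deg E1 w \<le> n" using deg_le_n[OF E1(1)] .
    then have "n - deg E1 w < n - deg E w" using E1(4) by simp
    then obtain E2 where "simple_graph n E2" "card E2 = card E1" "\<forall>v<n. v \<noteq> w \<longrightarrow> {w, v} \<in> E2"
      "chi \<alpha> E1 \<le> chi \<alpha> E2"
      using less.hyps[of E1] E1(1,2) less.prems(3) by blast
    then show ?thesis using E1 by (intro exI[of _ E2]) auto
  qed
qed

lemma sum_if_card: "finite V \<Longrightarrow> (\<Sum>v\<in>V. if P v then c else 0) = real (card {v \<in> V. P v}) * (c::real)"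
proof -
  assume f: "finite V"
  have "(\<Sum>v\<in>V. if P v then c else 0) = (\<Sum>v\<in>{v \<in> V. P v}. c)" by (rule sum.inter_filter[OF f, symmetric])
  also have "\<dots> = real (card {v \<in> V. P v}) * c" by simp
  finally show ?thesis .
qed

lemma sum_if_card_nat: "finite V \<Longrightarrow> (\<Sum>v\<in>V. if P v then 1 else 0) = card {v \<in> V. P v}"
  by (rule card_filter_sum[symmetric])

definition Pc :: "(nat \<Rightarrow> nat) \<Rightarrow> nat set \<Rightarrow> nat \<Rightarrow> nat" where
  "Pc h V j = card {v \<in> V. j \<le> h v}"

definition Dd :: "real \<Rightarrow> nat \<Rightarrow> nat \<Rightarrow> real" where
  "Dd a n j = pw a (n + j) - pw a (n + j - 1)"

lemma pw_split:
  assumes "h \<le> 4"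
  shows "pw a (n + h) = pw a n + (if 1 \<le> h then Dd a n 1 else 0) + (if 2 \<le> h then Dd a n 2 else 0)
     + (if 3 \<le> h then Dd a n 3 else 0) + (if 4 \<le> h then Dd a n 4 else 0)"
proof -
  have "h = 0 \<or> h = 1 \<or> h = 2 \<or> h = 3 \<or> h = 4" using assms by auto
  then show ?thesis unfolding Dd_def by (elim disjE) (simp_all add: numeral_eq_Suc)
qed

lemma h_split:
  assumes "h \<le> (4::nat)"
  shows "h = (if 1 \<le> h then 1 else 0) + (if 2 \<le> h then 1 else 0) + (if 3 \<le> h then 1 else 0) + (if 4 \<le> h then 1 else 0)"
proof -
  have "h = 0 \<or> h = 1 \<or> h = 2 \<or> h = 3 \<or> h = 4" using assms by auto
  then show ?thesis by (elim disjE) simp_all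
qed

lemma hub_sum:
  assumes f: "finite V" and b: "\<forall>v\<in>V. h v \<le> 4"
  shows "(\<Sum>v\<in>V. pw a (n + h v)) = real (card V) * pw a n + real (Pc h V 1) * Dd a n 1
     + real (Pc h V 2) * Dd a n 2 + real (Pc h V 3) * Dd a n 3 + real (Pc h V 4) * Dd a n 4"
proof -
  have "(\<Sum>v\<in>V. pw a (n + h v)) = (\<Sum>v\<in>V. pw a n + (if 1 \<le> h v then Dd a n 1 else 0) + (if 2 \<le> h v then Dd a n 2 else 0)
     + (if 3 \<le> h v then Dd a n 3 else 0) + (if 4 \<le> h v then Dd a n 4 else 0))"
    using b by (intro sum.cong refl pw_split) auto
  also have "\<dots> = real (card V) * pw a n + real (Pc h V 1) * Dd a n 1
     + real (Pc h V 2) * Dd a n 2 + real (Pc h V 3) * Dd a n 3 + real (Pc h V 4) * Dd a n 4"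
    unfolding sum.distrib Pc_def using f by (simp add: sum_if_card)
  finally show ?thesis .
qed

lemma h_sum:
  assumes f: "finite V" and b: "\<forall>v\<in>V. h v \<le> 4"
  shows "(\<Sum>v\<in>V. h v) = Pc h V 1 + Pc h V 2 + Pc h V 3 + Pc h V 4"
proof -
  have "(\<Sum>v\<in>V. h v) = (\<Sum>v\<in>V. (if 1 \<le> h v then 1 else 0) + (if 2 \<le> h v then 1 else 0) + (if 3 \<le> h v then 1 else 0) + (if 4 \<le> h v then 1 else 0))"
    using b by (intro sum.cong refl h_split) auto
  also have "\<dots> = Pc h V 1 + Pc h V 2 + Pc h V 3 + Pc h V 4"
    unfolding sum.distrib Pc_def using f by (simp add: sum_if_card_nat)
  finally show ?thesis .
qed

lemma hub_facts:
  assumes sg: "simple_graph n E" and w: "w < n" and dom: "\<forall>v<n. v \<noteq> w \<longrightarrow> {w, v} \<in> E"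
  defines "H \<equiv> {e \<in> E. w \<notin> e}"
  defines "h \<equiv> (\<lambda>v. card {e \<in> H. v \<in> e})"
  defines "V \<equiv> {..<n} - {w}"
  shows "card E = (n - 1) + card H"
    and "chi \<alpha> E = (\<Sum>v\<in>V. pw \<alpha> (n + h v)) + (\<Sum>e\<in>H. pw \<alpha> (\<Sum>x\<in>e. h x + 1))"
    and "(\<Sum>v\<in>V. h v) = 2 * card H"
    and "\<forall>u\<in>V. \<forall>v\<in>V. u \<noteq> v \<longrightarrow> h u + h v \<le> card H + 1"
    and "\<forall>e\<in>H. \<exists>u v. e = {u, v} \<and> u \<noteq> v \<and> u \<in> V \<and> v \<in> V"
    and "\<forall>v. h v \<le> card H"
    and "finite V" "card V = n - 1" "finite H"
proof -
  have fE: "finite E" using sg_finite[OF sg] .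
  have fH: "finite H" unfolding H_def using fE by simp
  show "finite H" by fact
  show fV: "finite V" unfolding V_def by simp
  show cV: "card V = n - 1" unfolding V_def using w by simp
  define S where "S = {e \<in> E. w \<in> e}"
  have S_eq: "S = (\<lambda>v. {w, v}) ` V"
  proof (intro equalityI subsetI)
    fix e assume "e \<in> S"
    then have e: "e \<in> E" "w \<in> e" unfolding S_def by auto
    then obtain p q where pq: "e = {p, q}" "p \<noteq> q" "p < n" "q < n" using sg_edge[OF sg] by blast
    show "e \<in> (\<lambda>v. {w, v}) ` V"
    proof (cases "p = w")
      case True
      then show ?thesis using pq unfolding V_def by (intro image_eqI[of _ _ q]) auto
    next
      case False
      then have "q = w" using pq e by auto
      then show ?thesis using pq unfolding V_def by (intro image_eqI[of _ _ p]) (auto simp: insert_commute)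
    qed
  next
    fix e assume "e \<in> (\<lambda>v. {w, v}) ` V"
    then obtain v where "v \<in> V" "e = {w, v}" by auto
    then show "e \<in> S" unfolding S_def V_def using dom by auto
  qed
  have cS: "card S = n - 1" unfolding S_eq using card_image[OF inj_dbl] cV by simp
  have ESH: "E = S \<union> H" "S \<inter> H = {}" unfolding S_def H_def by auto
  have fS: "finite S" unfolding S_def using fE by simp
  show cE: "card E = (n - 1) + card H"
    using ESH fS fH cS by (metis card_Un_disjoint)
  have degw: "deg E w = n - 1" unfolding deg_def using cS S_def by simp
  have degv: "deg E v = h v + 1" if "v \<in> V" for v
  proof -
    have vw: "v \<noteq> w" "v < n" using that unfolding V_def by auto
    have "{e \<in> E. v \<in> e} = insert {w, v} {e \<in> H. v \<in> e}"
    proof (intro equalityI subsetI)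
      fix e assume "e \<in> {e \<in> E. v \<in> e}"
      then have e: "e \<in> E" "v \<in> e" by auto
      then obtain p q where pq: "e = {p, q}" "p \<noteq> q" using sg_edge[OF sg] by blast
      show "e \<in> insert {w, v} {e \<in> H. v \<in> e}"
      proof (cases "w \<in> e")
        case True
        then have "e = {w, v}" using pq e vw by auto
        then show ?thesis by simp
      next
        case False then show ?thesis using e unfolding H_def by auto
      qed
    next
      fix e assume "e \<in> insert {w, v} {e \<in> H. v \<in> e}"
      then show "e \<in> {e \<in> E. v \<in> e}" using dom vw unfolding H_def by auto
    qed
    moreover have "{w, v} \<notin> {e \<in> H. v \<in> e}" unfolding H_def by auto
    ultimately show ?thesis unfolding deg_def h_def using fH by simp
  qed
  have Hsg: "simple_graph n H" using sg unfolding simple_graph_def H_def by auto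
  have Hedge: "\<forall>e\<in>H. \<exists>u v. e = {u, v} \<and> u \<noteq> v \<and> u \<in> V \<and> v \<in> V"
  proof
    fix e assume e: "e \<in> H"
    then obtain p q where pq: "e = {p, q}" "p \<noteq> q" "p < n" "q < n" using sg_edge[OF Hsg] by blast
    have "w \<notin> e" using e unfolding H_def by auto
    then show "\<exists>u v. e = {u, v} \<and> u \<noteq> v \<and> u \<in> V \<and> v \<in> V" using pq unfolding V_def by auto
  qed
  show "\<forall>e\<in>H. \<exists>u v. e = {u, v} \<and> u \<noteq> v \<and> u \<in> V \<and> v \<in> V" by fact
  show "chi \<alpha> E = (\<Sum>v\<in>V. pw \<alpha> (n + h v)) + (\<Sum>e\<in>H. pw \<alpha> (\<Sum>x\<in>e. h x + 1))"
  proof -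
    have "chi \<alpha> E = (\<Sum>e\<in>S. pw \<alpha> (\<Sum>x\<in>e. deg E x)) + (\<Sum>e\<in>H. pw \<alpha> (\<Sum>x\<in>e. deg E x))"
      unfolding chi_pw using ESH fS fH by (simp add: sum.union_disjoint)
    also have "(\<Sum>e\<in>S. pw \<alpha> (\<Sum>x\<in>e. deg E x)) = (\<Sum>v\<in>V. pw \<alpha> (\<Sum>x\<in>{w, v}. deg E x))"
      unfolding S_eq by (rule sum.reindex[OF inj_dbl, unfolded comp_def])
    also have "\<dots> = (\<Sum>v\<in>V. pw \<alpha> (n + h v))"
    proof (intro sum.cong refl)
      fix v assume v: "v \<in> V"
      then have "w \<noteq> v" unfolding V_def by auto
      then have "(\<Sum>x\<in>{w, v}. deg E x) = (n - 1) + (h v + 1)" using degw degv[OF v] by simp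
      also have "\<dots> = n + h v" using w by simp
      finally show "pw \<alpha> (\<Sum>x\<in>{w, v}. deg E x) = pw \<alpha> (n + h v)" by simp
    qed
    also have "(\<Sum>e\<in>H. pw \<alpha> (\<Sum>x\<in>e. deg E x)) = (\<Sum>e\<in>H. pw \<alpha> (\<Sum>x\<in>e. h x + 1))"
    proof (intro sum.cong refl)
      fix e assume e: "e \<in> H"
      then obtain u v where uv: "e = {u, v}" "u \<noteq> v" "u \<in> V" "v \<in> V" using Hedge by blast
      show "pw \<alpha> (\<Sum>x\<in>e. deg E x) = pw \<alpha> (\<Sum>x\<in>e. h x + 1)"
        using uv degv by simp
    qed
    finally show ?thesis .
  qed
  show "(\<Sum>v\<in>V. h v) = 2 * card H"
  proof -
    have hw: "h w = 0" unfolding h_def H_def by simp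
    have "(\<Sum>v<n. h v) = h w + (\<Sum>v\<in>V. h v)" unfolding V_def using w
      by (simp add: sum.remove)
    moreover have "(\<Sum>v<n. h v) = 2 * card H" unfolding h_def by (rule handshake[OF Hsg])
    ultimately show ?thesis using hw by simp
  qed
  show "\<forall>v. h v \<le> card H" unfolding h_def using fH by (auto intro: card_mono)
  show "\<forall>u\<in>V. \<forall>v\<in>V. u \<noteq> v \<longrightarrow> h u + h v \<le> card H + 1"
  proof (intro ballI impI)
    fix u v assume uv: "u \<in> V" "v \<in> V" "u \<noteq> v"
    define Au where "Au = {e \<in> H. u \<in> e}"
    define Av where "Av = {e \<in> H. v \<in> e}"
    have fa: "finite Au" "finite Av" unfolding Au_def Av_def using fH by auto
    have "Au \<inter> Av \<subseteq> {{u, v}}"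
    proof
      fix e assume "e \<in> Au \<inter> Av"
      then have e: "e \<in> H" "u \<in> e" "v \<in> e" unfolding Au_def Av_def by auto
      then obtain p q where "e = {p, q}" "p \<noteq> q" using Hedge by blast
      then show "e \<in> {{u, v}}" using e uv by auto
    qed
    then have "card (Au \<inter> Av) \<le> 1" by (metis card_mono finite.intros is_singleton_altdef is_singleton_def card.empty subset_singletonD le_numeral_extra(1) zero_le_one)
    moreover have "card (Au \<union> Av) \<le> card H" using fH unfolding Au_def Av_def by (intro card_mono) auto
    moreover have "card Au + card Av = card (Au \<union> Av) + card (Au \<inter> Av)" using card_Un_Int fa by blast
    ultimately show "h u + h v \<le> card H + 1" unfolding h_def Au_def Av_def by linarith
  qed
qed

lemma dom_analysis:
  assumes a: "1 \<le> \<alpha>" and sg: "simple_graph n E" and w: "w < n" and dom: "\<forall>v<n. v \<noteq> w \<longrightarrow> {w, v} \<in> E"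
    and cE: "card E + 1 = n + k" and k4: "k \<le> 4"
  obtains P :: "nat \<Rightarrow> nat" and I :: real where
    "chi \<alpha> E = real (n - 1) * pw \<alpha> n + real (P 1) * Dd \<alpha> n 1 + real (P 2) * Dd \<alpha> n 2
        + real (P 3) * Dd \<alpha> n 3 + real (P 4) * Dd \<alpha> n 4 + I"
    "I \<le> real k * pw \<alpha> (k + 3)"
    "P 1 + P 2 + P 3 + P 4 = 2 * k"
    "P 4 \<le> P 3" "P 3 \<le> P 2" "P 2 \<le> P 1" "P 1 \<le> n - 1"
    "\<forall>j. k < j \<longrightarrow> P j = 0"
    "\<forall>a b. k + 1 < a + b \<longrightarrow> 1 \<le> P a \<longrightarrow> P b \<le> 1"
    "k = 4 \<Longrightarrow> n = 5 \<Longrightarrow> I \<le> 2 * pw \<alpha> 7 + 2 * pw \<alpha> 6"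
proof -
  define H where "H = {e \<in> E. w \<notin> e}"
  define h where "h = (\<lambda>v. card {e \<in> H. v \<in> e})"
  define V where "V = {..<n} - {w}"
  note hf0 = hub_facts[OF sg w dom, folded H_def, folded V_def]
  have hf2: "chi \<alpha> E = (\<Sum>v\<in>V. pw \<alpha> (n + h v)) + (\<Sum>e\<in>H. pw \<alpha> (\<Sum>x\<in>e. h x + 1))"
    using hf0(2) unfolding h_def by simp
  have hf3: "(\<Sum>v\<in>V. h v) = 2 * card H" using hf0(3) unfolding h_def by simp
  have hf4: "\<forall>u\<in>V. \<forall>v\<in>V. u \<noteq> v \<longrightarrow> h u + h v \<le> card H + 1" using hf0(4) unfolding h_def by simp
  have hf6: "\<forall>v. h v \<le> card H" using hf0(6) unfolding h_def by simp
  note hf = hf0(1) hf2 hf3 hf4 hf0(5) hf6 hf0(7,8,9)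
  have cH: "card H = k" using hf(1) cE w by simp
  have hb: "\<forall>v\<in>V. h v \<le> 4" using hf6 cH k4 le_trans by blast
  define P where "P = Pc h V"
  define I where "I = (\<Sum>e\<in>H. pw \<alpha> (\<Sum>x\<in>e. h x + 1))"
  have val: "(\<Sum>x\<in>e. h x + 1) = h u + h v + 2" if "e = {u, v}" "u \<noteq> v" for e u v
    using that by simp
  have chiE: "chi \<alpha> E = real (n - 1) * pw \<alpha> n + real (P 1) * Dd \<alpha> n 1 + real (P 2) * Dd \<alpha> n 2
        + real (P 3) * Dd \<alpha> n 3 + real (P 4) * Dd \<alpha> n 4 + I"
    unfolding hf(2) I_def P_def hub_sum[OF hf(7) hb] hf(8) by simp
  have pair: "h u + h v \<le> k + 1" if "u \<in> V" "v \<in> V" "u \<noteq> v" for u v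
    using hf(4) that cH by auto
  have evals: "\<exists>u v. e = {u, v} \<and> u \<noteq> v \<and> u \<in> V \<and> v \<in> V" if "e \<in> H" for e
    using hf(5) that by blast
  have Ib: "I \<le> real k * pw \<alpha> (k + 3)"
  proof -
    have "I \<le> (\<Sum>e\<in>H. pw \<alpha> (k + 3))" unfolding I_def
    proof (rule sum_mono)
      fix e assume "e \<in> H"
      then obtain u v where uv: "e = {u, v}" "u \<noteq> v" "u \<in> V" "v \<in> V" using evals by blast
      show "pw \<alpha> (\<Sum>x\<in>e. h x + 1) \<le> pw \<alpha> (k + 3)"
        using pair[OF uv(3,4,2)] val[OF uv(1,2)] a by (intro pw_mono) auto
    qed
    then show ?thesis using cH by simp
  qed
  have Psum: "P 1 + P 2 + P 3 + P 4 = 2 * k" unfolding P_def using h_sum[OF hf(7) hb] hf(3) cH by simp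
  have Pmono: "P j \<le> P i" if "i \<le> j" for i j
    unfolding P_def Pc_def using hf(7) that by (intro card_mono) auto
  have P1n: "P 1 \<le> n - 1" unfolding P_def Pc_def using hf(7,8) by (metis (no_types, lifting) card_mono mem_Collect_eq subsetI)
  have Pz: "\<forall>j. k < j \<longrightarrow> P j = 0"
  proof (intro allI impI)
    fix j assume "k < j"
    then have "\<not> (j \<le> h v)" for v using hf6[rule_format, of v] cH by simp
    then have e: "{v \<in> V. j \<le> h v} = {}" by simp
    show "P j = 0" unfolding P_def Pc_def e by simp
  qed
  have Ppair: "\<forall>a b. k + 1 < a + b \<longrightarrow> 1 \<le> P a \<longrightarrow> P b \<le> 1"
  proof (intro allI impI)
    fix a b assume ab: "k + 1 < a + b" "1 \<le> P a"
    then have "card {v \<in> V. a \<le> h v} \<ge> 1" unfolding P_def Pc_def by simp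
    then have "{v \<in> V. a \<le> h v} \<noteq> {}" by (metis card.empty not_one_le_zero)
    then obtain x where x: "x \<in> V" "a \<le> h x" by auto
    have "{v \<in> V. b \<le> h v} \<subseteq> {x}"
    proof
      fix y assume y: "y \<in> {v \<in> V. b \<le> h v}"
      show "y \<in> {x}"
      proof (rule ccontr)
        assume "y \<notin> {x}"
        then have "h x + h y \<le> k + 1" using pair[of x y] x y by auto
        then show False using x y ab by auto
      qed
    qed
    then have "card {v \<in> V. b \<le> h v} \<le> card {x}" by (intro card_mono) auto
    then show "P b \<le> 1" unfolding P_def Pc_def by simp
  qed
  have n5: "I \<le> 2 * pw \<alpha> 7 + 2 * pw \<alpha> 6" if k: "k = 4" and n: "n = 5"
  proof -
    have P1: "P 1 \<le> 4" using P1n n by simp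
    have P3: "P 3 \<le> 1" using Ppair[rule_format, of 3 3] k by (cases "1 \<le> P 3") auto
    have P4: "P 4 = 0"
    proof (rule ccontr)
      assume "P 4 \<noteq> 0"
      then have "P 2 \<le> 1" using Ppair[rule_format, of 4 2] k by simp
      then show False using Psum k P1 Pmono[of 3 4] Pmono[of 2 3] by simp
    qed
    have h3: "h v \<le> 3" if "v \<in> V" for v
    proof (rule ccontr)
      assume "\<not> h v \<le> 3"
      then have "v \<in> {v \<in> V. 4 \<le> h v}" using that by simp
      then have "{v \<in> V. 4 \<le> h v} \<noteq> {}" by blast
      then have "card {v \<in> V. 4 \<le> h v} \<noteq> 0" using hf(7) by simp
      then show False using P4 unfolding P_def Pc_def by simp
    qed
    define vl where "vl e = (\<Sum>x\<in>e. h x + 1)" for e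
    define H7 where "H7 = {e \<in> H. vl e = 7}"
    have vle: "vl e \<le> 7" if eH: "e \<in> H" for e
    proof -
      obtain u v where uv: "e = {u, v}" "u \<noteq> v" "u \<in> V" "v \<in> V" using evals[OF eH] by blast
      show ?thesis using pair[OF uv(3,4,2)] val[OF uv(1,2)] k unfolding vl_def by simp
    qed
    have fH7: "finite H7" unfolding H7_def using hf(9) by simp
    have cH7: "card H7 \<le> 2"
    proof (cases "P 3 = 0")
      case True
      have "H7 = {}"
      proof (rule ccontr)
        assume "H7 \<noteq> {}"
        then obtain e where e: "e \<in> H" "vl e = 7" unfolding H7_def by auto
        obtain u v where uv: "e = {u, v}" "u \<noteq> v" "u \<in> V" "v \<in> V" using evals[OF e(1)] by blast
        have "h u + h v = 5" using e(2) val[OF uv(1,2)] unfolding vl_def by simp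
        then have "3 \<le> h u \<or> 3 \<le> h v" by linarith
        then have "{x \<in> V. 3 \<le> h x} \<noteq> {}" using uv by auto
        then have "card {x \<in> V. 3 \<le> h x} \<noteq> 0" using hf(7) by simp
        then show False using True unfolding P_def Pc_def by simp
      qed
      then show ?thesis by simp
    next
      case False
      then have P31: "P 3 = 1" using P3 by simp
      then obtain t where t: "{x \<in> V. 3 \<le> h x} = {t}" unfolding P_def Pc_def by (auto simp: card_Suc_eq)
      have P12: "P 1 = 4" "P 2 = 3" using Psum k P1 P4 P31 Pmono[of 1 2] by auto
      define S2 where "S2 = {x \<in> V. h x = 2}"
      have S2eq: "S2 = {x \<in> V. 2 \<le> h x} - {x \<in> V. 3 \<le> h x}" unfolding S2_def using h3 by auto
      have "card S2 = card {x \<in> V. 2 \<le> h x} - card {x \<in> V. 3 \<le> h x}"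
        unfolding S2eq using hf(7) by (intro card_Diff_subset) auto
      then have cS2: "card S2 = 2" using P12 P31 unfolding P_def Pc_def by simp
      have "H7 \<subseteq> (\<lambda>v. {t, v}) ` S2"
      proof
        fix e assume "e \<in> H7"
        then have e: "e \<in> H" "vl e = 7" unfolding H7_def by auto
        obtain u v where uv: "e = {u, v}" "u \<noteq> v" "u \<in> V" "v \<in> V" using evals[OF e(1)] by blast
        have s5: "h u + h v = 5" using e(2) val[OF uv(1,2)] unfolding vl_def by simp
        have "h u \<le> 3" "h v \<le> 3" using h3 uv by auto
        then consider "h u = 3" "h v = 2" | "h u = 2" "h v = 3" using s5 by linarith
        then show "e \<in> (\<lambda>v. {t, v}) ` S2"
        proof cases
          case 1
          then have "u \<in> {x \<in> V. 3 \<le> h x}" using uv by simp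
          then have "u = t" using t by simp
          then show ?thesis using uv 1 unfolding S2_def by auto
        next
          case 2
          then have "v \<in> {x \<in> V. 3 \<le> h x}" using uv by simp
          then have "v = t" using t by simp
          then show ?thesis using uv 2 unfolding S2_def by (auto simp: insert_commute)
        qed
      qed
      then have "card H7 \<le> card ((\<lambda>v. {t, v}) ` S2)" using hf(7) unfolding S2_def by (intro card_mono) auto
      also have "\<dots> \<le> card S2" by (rule card_image_le) (simp add: S2_def hf(7))
      finally show ?thesis using cS2 by simp
    qed
    have "I = sum (\<lambda>e. pw \<alpha> (vl e)) H7 + sum (\<lambda>e. pw \<alpha> (vl e)) (H - H7)"
      unfolding I_def vl_def H7_def using hf(9) by (subst sum.subset_diff[of "{e \<in> H. vl e = 7}" H]) (auto simp: vl_def)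
    also have "sum (\<lambda>e. pw \<alpha> (vl e)) H7 = real (card H7) * pw \<alpha> 7" unfolding H7_def by simp
    also have "sum (\<lambda>e. pw \<alpha> (vl e)) (H - H7) \<le> (\<Sum>e\<in>H - H7. pw \<alpha> 6)"
    proof (rule sum_mono)
      fix e assume "e \<in> H - H7"
      then have "vl e \<le> 6" using vle unfolding H7_def by fastforce
      then show "pw \<alpha> (vl e) \<le> pw \<alpha> 6" using a by (intro pw_mono) auto
    qed
    also have "(\<Sum>e\<in>H - H7. pw \<alpha> 6) = real (4 - card H7) * pw \<alpha> 6"
    proof -
      have "H7 \<subseteq> H" unfolding H7_def by auto
      then have "card (H - H7) = 4 - card H7" using hf(9) cH k by (simp add: card_Diff_subset fH7)
      then show ?thesis by simp
    qed
    finally have Ile: "I \<le> real (card H7) * pw \<alpha> 7 + real (4 - card H7) * pw \<alpha> 6" by simp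
    have p67: "pw \<alpha> 6 \<le> pw \<alpha> 7" using a by (intro pw_mono) auto
    have "card H7 = 0 \<or> card H7 = 1 \<or> card H7 = 2" using cH7 by auto
    then show ?thesis using Ile p67 by (elim disjE) (simp_all add: numeral_eq_Suc)
  qed
  show ?thesis using that chiE Ib Psum Pmono[of 3 4] Pmono[of 2 3] Pmono[of 1 2] P1n Pz Ppair n5 by auto
qed

lemma dom_conn:
  assumes w: "w < n" and dom: "\<forall>v<n. v \<noteq> w \<longrightarrow> {w, v} \<in> E"
  shows "connected_graph n E"
  unfolding connected_graph_def
proof (intro allI impI)
  fix u v assume uv: "u < n" "v < n"
  have r1: "(x, w) \<in> (adj_rel E)\<^sup>*" if "x < n" for x
  proof (cases "x = w")
    case False
    then have "{w, x} \<in> E" using dom that by simp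
    then have "{x, w} \<in> E" by (simp add: insert_commute)
    then show ?thesis unfolding adj_rel_def by auto
  qed simp
  have r2: "(w, x) \<in> (adj_rel E)\<^sup>*" if "x < n" for x
  proof (cases "x = w")
    case False
    then have "{w, x} \<in> E" using dom that by simp
    then show ?thesis unfolding adj_rel_def by auto
  qed simp
  show "(u, v) \<in> (adj_rel E)\<^sup>*" using r1[OF uv(1)] r2[OF uv(2)] by simp
qed

lemma star_eq: "star n = (\<lambda>i. {0, i}) ` {i. 0 < i \<and> i < n}"
  unfolding star_def by auto

lemma target_facts:
  assumes n: "1 \<le> n" and fX: "finite X"
    and X: "\<forall>e\<in>X. \<exists>u v. e = {u, v} \<and> u \<noteq> v \<and> 0 < u \<and> u < n \<and> 0 < v \<and> v < n"
    and hb: "\<forall>v. card {e \<in> X. v \<in> e} \<le> 4"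
  defines "T \<equiv> star n \<union> X"
  defines "h \<equiv> (\<lambda>v. card {e \<in> X. v \<in> e})"
  shows "simple_graph n T" "connected_graph n T" "card T = (n - 1) + card X"
    "chi \<alpha> T = real (n - 1) * pw \<alpha> n + real (Pc h ({..<n} - {0}) 1) * Dd \<alpha> n 1
        + real (Pc h ({..<n} - {0}) 2) * Dd \<alpha> n 2 + real (Pc h ({..<n} - {0}) 3) * Dd \<alpha> n 3
        + real (Pc h ({..<n} - {0}) 4) * Dd \<alpha> n 4 + (\<Sum>e\<in>X. pw \<alpha> (\<Sum>x\<in>e. h x + 1))"
proof -
  show sg: "simple_graph n T" unfolding T_def simple_graph_def
  proof
    fix e assume "e \<in> star n \<union> X"
    then consider "e \<in> star n" | "e \<in> X" by blast
    then show "\<exists>u v. e = {u, v} \<and> u \<noteq> v \<and> u < n \<and> v < n"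
    proof cases
      case 1
      then obtain i where "e = {0, i}" "0 < i" "i < n" unfolding star_def by auto
      then show ?thesis using n by (intro exI[of _ 0] exI[of _ i]) auto
    next
      case 2
      then obtain u v where "e = {u, v} \<and> u \<noteq> v \<and> 0 < u \<and> u < n \<and> 0 < v \<and> v < n" using X by blast
      then show ?thesis by blast
    qed
  qed
  have dom: "\<forall>v<n. v \<noteq> 0 \<longrightarrow> {0, v} \<in> T" unfolding T_def star_def by auto
  have w: "0 < n" using n by simp
  show "connected_graph n T" by (rule dom_conn[OF w dom])
  have HX: "{e \<in> T. 0 \<notin> e} = X"
  proof -
    have "\<forall>e\<in>X. 0 \<notin> e" using X by fastforce
    then show ?thesis unfolding T_def star_def by auto
  qed
  note hf0 = hub_facts[OF sg w dom, unfolded HX]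
  show "card T = (n - 1) + card X" using hf0(1) .
  have hf2: "chi \<alpha> T = (\<Sum>v\<in>{..<n} - {0}. pw \<alpha> (n + h v)) + (\<Sum>e\<in>X. pw \<alpha> (\<Sum>x\<in>e. h x + 1))"
    using hf0(2) unfolding h_def by simp
  have hb': "\<forall>v\<in>{..<n} - {0}. h v \<le> 4" using hb unfolding h_def by simp
  show "chi \<alpha> T = real (n - 1) * pw \<alpha> n + real (Pc h ({..<n} - {0}) 1) * Dd \<alpha> n 1
        + real (Pc h ({..<n} - {0}) 2) * Dd \<alpha> n 2 + real (Pc h ({..<n} - {0}) 3) * Dd \<alpha> n 3
        + real (Pc h ({..<n} - {0}) 4) * Dd \<alpha> n 4 + (\<Sum>e\<in>X. pw \<alpha> (\<Sum>x\<in>e. h x + 1))"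
    unfolding hf2 hub_sum[OF hf0(7) hb'] hf0(8) by simp
qed

lemma filt_ins: "{e \<in> insert a A. P e} = (if P a then insert a {e \<in> A. P e} else {e \<in> A. P e})"
  by auto

lemma Pc_eq: "{v \<in> V. j \<le> h v} = S \<Longrightarrow> Pc h V j = card S"
  unfolding Pc_def by simp

lemma edge_ex: "a \<noteq> b \<Longrightarrow> 0 < a \<Longrightarrow> a < n \<Longrightarrow> 0 < b \<Longrightarrow> b < n \<Longrightarrow>
  \<exists>u v. {a, b} = {u, v} \<and> u \<noteq> v \<and> 0 < u \<and> u < n \<and> 0 < v \<and> v < n"
  by blast

lemma star_facts:
  assumes n: "1 \<le> n"
  shows "is_tree n (star n)"
    "chi \<alpha> (star n) = real (n - 1) * pw \<alpha> n"
proof -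
  define X :: "nat set set" where "X = {}"
  have G: "star n = star n \<union> X" unfolding X_def by simp
  have hX: "card {e \<in> X. v \<in> e} = 0" for v
  proof -
    have "{e \<in> X. v \<in> e} = {}"
      unfolding X_def by auto
    then show ?thesis unfolding X_def by (simp add: doubleton_eq_iff)
  qed
  have fX: "finite X" unfolding X_def by simp
  have cX: "card X = 0" unfolding X_def by (simp add: doubleton_eq_iff)
  have Xe: "\<forall>e\<in>X. \<exists>u v. e = {u, v} \<and> u \<noteq> v \<and> 0 < u \<and> u < n \<and> 0 < v \<and> v < n"
    unfolding X_def using n by (auto intro!: edge_ex)
  have hb: "\<forall>v. card {e \<in> X. v \<in> e} \<le> 4" unfolding hX by simp
  note tf = target_facts[OF _ fX Xe hb, folded G]
  have n1: "1 \<le> n" using n by simp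
  show "is_tree n (star n)" unfolding conn_k_cyclic_def using tf(1-3)[OF n1] cX n by simp
  define h where "h = (\<lambda>v. card {e \<in> X. v \<in> e})"
  have P1: "Pc h ({..<n} - {0}) 1 = 0"
    by (subst Pc_eq[where S="{}"]) (use n in \<open>auto simp: h_def hX split: if_splits\<close>)
  have P2: "Pc h ({..<n} - {0}) 2 = 0"
    by (subst Pc_eq[where S="{}"]) (use n in \<open>auto simp: h_def hX split: if_splits\<close>)
  have P3: "Pc h ({..<n} - {0}) 3 = 0"
    by (subst Pc_eq[where S="{}"]) (use n in \<open>auto simp: h_def hX split: if_splits\<close>)
  have P4: "Pc h ({..<n} - {0}) 4 = 0"
    by (subst Pc_eq[where S="{}"]) (use n in \<open>auto simp: h_def hX split: if_splits\<close>)
  have inner: "(\<Sum>e\<in>X. pw \<alpha> (\<Sum>x\<in>e. h x + 1)) = 0"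
    unfolding X_def by (simp add: doubleton_eq_iff h_def hX eval_nat_numeral)
  show "chi \<alpha> (star n) = real (n - 1) * pw \<alpha> n"
    using tf(4)[OF n1] P1 P2 P3 P4 inner unfolding h_def by simp
qed

lemma starplus_facts:
  assumes n: "3 \<le> n"
  shows "unicyclic n (star_plus n)"
    "chi \<alpha> (star_plus n) = real (n - 1) * pw \<alpha> n + real 2 * Dd \<alpha> n 1 + pw \<alpha> 4"
proof -
  define X :: "nat set set" where "X = {{1, 2}}"
  have G: "star_plus n = star n \<union> X" unfolding star_plus_def X_def by simp
  have hX: "card {e \<in> X. v \<in> e} = (if v = 1 \<or> v = 2 then 1 else 0)" for v
  proof -
    have "{e \<in> X. v \<in> e} = (if v = 1 then {{1, 2}} else (if v = 2 then {{1, 2}} else {}))"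
      unfolding X_def by auto
    then show ?thesis unfolding X_def by (simp add: doubleton_eq_iff)
  qed
  have fX: "finite X" unfolding X_def by simp
  have cX: "card X = 1" unfolding X_def by (simp add: doubleton_eq_iff)
  have Xe: "\<forall>e\<in>X. \<exists>u v. e = {u, v} \<and> u \<noteq> v \<and> 0 < u \<and> u < n \<and> 0 < v \<and> v < n"
    unfolding X_def using n by (auto intro!: edge_ex)
  have hb: "\<forall>v. card {e \<in> X. v \<in> e} \<le> 4" unfolding hX by simp
  note tf = target_facts[OF _ fX Xe hb, folded G]
  have n1: "1 \<le> n" using n by simp
  show "unicyclic n (star_plus n)" unfolding conn_k_cyclic_def using tf(1-3)[OF n1] cX n by simp
  define h where "h = (\<lambda>v. card {e \<in> X. v \<in> e})"
  have P1: "Pc h ({..<n} - {0}) 1 = 2"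
    by (subst Pc_eq[where S="{1,2}"]) (use n in \<open>auto simp: h_def hX split: if_splits\<close>)
  have P2: "Pc h ({..<n} - {0}) 2 = 0"
    by (subst Pc_eq[where S="{}"]) (use n in \<open>auto simp: h_def hX split: if_splits\<close>)
  have P3: "Pc h ({..<n} - {0}) 3 = 0"
    by (subst Pc_eq[where S="{}"]) (use n in \<open>auto simp: h_def hX split: if_splits\<close>)
  have P4: "Pc h ({..<n} - {0}) 4 = 0"
    by (subst Pc_eq[where S="{}"]) (use n in \<open>auto simp: h_def hX split: if_splits\<close>)
  have inner: "(\<Sum>e\<in>X. pw \<alpha> (\<Sum>x\<in>e. h x + 1)) = pw \<alpha> 4"
    unfolding X_def by (simp add: doubleton_eq_iff h_def hX eval_nat_numeral)
  show "chi \<alpha> (star_plus n) = real (n - 1) * pw \<alpha> n + real 2 * Dd \<alpha> n 1 + pw \<alpha> 4"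
    using tf(4)[OF n1] P1 P2 P3 P4 inner unfolding h_def by simp
qed

lemma B1_facts:
  assumes n: "4 \<le> n"
  shows "bicyclic n (B1 n)"
    "chi \<alpha> (B1 n) = real (n - 1) * pw \<alpha> n + real 3 * Dd \<alpha> n 1 + Dd \<alpha> n 2 + 2 * pw \<alpha> 5"
proof -
  define X :: "nat set set" where "X = {{1, 2}, {2, 3}}"
  have G: "B1 n = star n \<union> X" unfolding B1_def X_def by simp
  have hX: "card {e \<in> X. v \<in> e} = (if v = 1 \<or> v = 3 then 1 else (if v = 2 then 2 else 0))" for v
  proof -
    have "{e \<in> X. v \<in> e} = (if v = 1 then {{1, 2}} else (if v = 2 then {{1, 2}, {2, 3}} else (if v = 3 then {{2, 3}} else {})))"
      unfolding X_def by auto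
    then show ?thesis unfolding X_def by (simp add: doubleton_eq_iff)
  qed
  have fX: "finite X" unfolding X_def by simp
  have cX: "card X = 2" unfolding X_def by (simp add: doubleton_eq_iff)
  have Xe: "\<forall>e\<in>X. \<exists>u v. e = {u, v} \<and> u \<noteq> v \<and> 0 < u \<and> u < n \<and> 0 < v \<and> v < n"
    unfolding X_def using n by (auto intro!: edge_ex)
  have hb: "\<forall>v. card {e \<in> X. v \<in> e} \<le> 4" unfolding hX by simp
  note tf = target_facts[OF _ fX Xe hb, folded G]
  have n1: "1 \<le> n" using n by simp
  show "bicyclic n (B1 n)" unfolding conn_k_cyclic_def using tf(1-3)[OF n1] cX n by simp
  define h where "h = (\<lambda>v. card {e \<in> X. v \<in> e})"
  have P1: "Pc h ({..<n} - {0}) 1 = 3"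
    by (subst Pc_eq[where S="{1,2,3}"]) (use n in \<open>auto simp: h_def hX split: if_splits\<close>)
  have P2: "Pc h ({..<n} - {0}) 2 = 1"
    by (subst Pc_eq[where S="{2}"]) (use n in \<open>auto simp: h_def hX split: if_splits\<close>)
  have P3: "Pc h ({..<n} - {0}) 3 = 0"
    by (subst Pc_eq[where S="{}"]) (use n in \<open>auto simp: h_def hX split: if_splits\<close>)
  have P4: "Pc h ({..<n} - {0}) 4 = 0"
    by (subst Pc_eq[where S="{}"]) (use n in \<open>auto simp: h_def hX split: if_splits\<close>)
  have inner: "(\<Sum>e\<in>X. pw \<alpha> (\<Sum>x\<in>e. h x + 1)) = 2 * pw \<alpha> 5"
    unfolding X_def by (simp add: doubleton_eq_iff h_def hX eval_nat_numeral)
  show "chi \<alpha> (B1 n) = real (n - 1) * pw \<alpha> n + real 3 * Dd \<alpha> n 1 + Dd \<alpha> n 2 + 2 * pw \<alpha> 5"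
    using tf(4)[OF n1] P1 P2 P3 P4 inner unfolding h_def by simp
qed

lemma G4_facts:
  assumes n: "5 \<le> n"
  shows "tricyclic n (G4 n)"
    "chi \<alpha> (G4 n) = real (n - 1) * pw \<alpha> n + real 4 * Dd \<alpha> n 1 + Dd \<alpha> n 2 + Dd \<alpha> n 3 + 3 * pw \<alpha> 6"
proof -
  define X :: "nat set set" where "X = {{1, 2}, {1, 3}, {1, 4}}"
  have G: "G4 n = star n \<union> X" unfolding G4_def X_def by simp
  have hX: "card {e \<in> X. v \<in> e} = (if v = 2 \<or> v = 3 \<or> v = 4 then 1 else (if v = 1 then 3 else 0))" for v
  proof -
    have "{e \<in> X. v \<in> e} = (if v = 1 then {{1, 2}, {1, 3}, {1, 4}} else (if v = 2 then {{1, 2}} else (if v = 3 then {{1, 3}} else (if v = 4 then {{1, 4}} else {}))))"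
      unfolding X_def by auto
    then show ?thesis unfolding X_def by (simp add: doubleton_eq_iff)
  qed
  have fX: "finite X" unfolding X_def by simp
  have cX: "card X = 3" unfolding X_def by (simp add: doubleton_eq_iff)
  have Xe: "\<forall>e\<in>X. \<exists>u v. e = {u, v} \<and> u \<noteq> v \<and> 0 < u \<and> u < n \<and> 0 < v \<and> v < n"
    unfolding X_def using n by (auto intro!: edge_ex)
  have hb: "\<forall>v. card {e \<in> X. v \<in> e} \<le> 4" unfolding hX by simp
  note tf = target_facts[OF _ fX Xe hb, folded G]
  have n1: "1 \<le> n" using n by simp
  show "tricyclic n (G4 n)" unfolding conn_k_cyclic_def using tf(1-3)[OF n1] cX n by simp
  define h where "h = (\<lambda>v. card {e \<in> X. v \<in> e})"
  have P1: "Pc h ({..<n} - {0}) 1 = 4"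
    by (subst Pc_eq[where S="{1,2,3,4}"]) (use n in \<open>auto simp: h_def hX split: if_splits\<close>)
  have P2: "Pc h ({..<n} - {0}) 2 = 1"
    by (subst Pc_eq[where S="{1}"]) (use n in \<open>auto simp: h_def hX split: if_splits\<close>)
  have P3: "Pc h ({..<n} - {0}) 3 = 1"
    by (subst Pc_eq[where S="{1}"]) (use n in \<open>auto simp: h_def hX split: if_splits\<close>)
  have P4: "Pc h ({..<n} - {0}) 4 = 0"
    by (subst Pc_eq[where S="{}"]) (use n in \<open>auto simp: h_def hX split: if_splits\<close>)
  have inner: "(\<Sum>e\<in>X. pw \<alpha> (\<Sum>x\<in>e. h x + 1)) = 3 * pw \<alpha> 6"
    unfolding X_def by (simp add: doubleton_eq_iff h_def hX eval_nat_numeral)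
  show "chi \<alpha> (G4 n) = real (n - 1) * pw \<alpha> n + real 4 * Dd \<alpha> n 1 + Dd \<alpha> n 2 + Dd \<alpha> n 3 + 3 * pw \<alpha> 6"
    using tf(4)[OF n1] P1 P2 P3 P4 inner unfolding h_def by simp
qed

lemma G5_facts:
  assumes n: "5 \<le> n"
  shows "tricyclic n (G5 n)"
    "chi \<alpha> (G5 n) = real (n - 1) * pw \<alpha> n + real 3 * Dd \<alpha> n 1 + real 3 * Dd \<alpha> n 2 + 3 * pw \<alpha> 6"
proof -
  define X :: "nat set set" where "X = {{1, 2}, {2, 3}, {3, 1}}"
  have G: "G5 n = star n \<union> X" unfolding G5_def X_def by simp
  have hX: "card {e \<in> X. v \<in> e} = (if v = 1 \<or> v = 2 \<or> v = 3 then 2 else 0)" for v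
  proof -
    have "{e \<in> X. v \<in> e} = (if v = 1 then {{1, 2}, {3, 1}} else (if v = 2 then {{1, 2}, {2, 3}} else (if v = 3 then {{2, 3}, {3, 1}} else {})))"
      unfolding X_def by auto
    then show ?thesis unfolding X_def by (simp add: doubleton_eq_iff)
  qed
  have fX: "finite X" unfolding X_def by simp
  have cX: "card X = 3" unfolding X_def by (simp add: doubleton_eq_iff)
  have Xe: "\<forall>e\<in>X. \<exists>u v. e = {u, v} \<and> u \<noteq> v \<and> 0 < u \<and> u < n \<and> 0 < v \<and> v < n"
    unfolding X_def using n by (auto intro!: edge_ex)
  have hb: "\<forall>v. card {e \<in> X. v \<in> e} \<le> 4" unfolding hX by simp
  note tf = target_facts[OF _ fX Xe hb, folded G]
  have n1: "1 \<le> n" using n by simp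
  show "tricyclic n (G5 n)" unfolding conn_k_cyclic_def using tf(1-3)[OF n1] cX n by simp
  define h where "h = (\<lambda>v. card {e \<in> X. v \<in> e})"
  have P1: "Pc h ({..<n} - {0}) 1 = 3"
    by (subst Pc_eq[where S="{1,2,3}"]) (use n in \<open>auto simp: h_def hX split: if_splits\<close>)
  have P2: "Pc h ({..<n} - {0}) 2 = 3"
    by (subst Pc_eq[where S="{1,2,3}"]) (use n in \<open>auto simp: h_def hX split: if_splits\<close>)
  have P3: "Pc h ({..<n} - {0}) 3 = 0"
    by (subst Pc_eq[where S="{}"]) (use n in \<open>auto simp: h_def hX split: if_splits\<close>)
  have P4: "Pc h ({..<n} - {0}) 4 = 0"
    by (subst Pc_eq[where S="{}"]) (use n in \<open>auto simp: h_def hX split: if_splits\<close>)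
  have inner: "(\<Sum>e\<in>X. pw \<alpha> (\<Sum>x\<in>e. h x + 1)) = 3 * pw \<alpha> 6"
    unfolding X_def by (simp add: doubleton_eq_iff h_def hX eval_nat_numeral)
  show "chi \<alpha> (G5 n) = real (n - 1) * pw \<alpha> n + real 3 * Dd \<alpha> n 1 + real 3 * Dd \<alpha> n 2 + 3 * pw \<alpha> 6"
    using tf(4)[OF n1] P1 P2 P3 P4 inner unfolding h_def by simp
qed

lemma H4_facts:
  assumes n: "6 \<le> n"
  shows "tetracyclic n (H4 n)"
    "chi \<alpha> (H4 n) = real (n - 1) * pw \<alpha> n + real 5 * Dd \<alpha> n 1 + Dd \<alpha> n 2 + Dd \<alpha> n 3 + Dd \<alpha> n 4 + 4 * pw \<alpha> 7"
proof -
  define X :: "nat set set" where "X = {{1, 2}, {1, 3}, {1, 4}, {1, 5}}"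
  have G: "H4 n = star n \<union> X" unfolding H4_def X_def by simp
  have hX: "card {e \<in> X. v \<in> e} = (if v = 2 \<or> v = 3 \<or> v = 4 \<or> v = 5 then 1 else (if v = 1 then 4 else 0))" for v
  proof -
    have "{e \<in> X. v \<in> e} = (if v = 1 then {{1, 2}, {1, 3}, {1, 4}, {1, 5}} else (if v = 2 then {{1, 2}} else (if v = 3 then {{1, 3}} else (if v = 4 then {{1, 4}} else (if v = 5 then {{1, 5}} else {})))))"
      unfolding X_def by auto
    then show ?thesis unfolding X_def by (simp add: doubleton_eq_iff)
  qed
  have fX: "finite X" unfolding X_def by simp
  have cX: "card X = 4" unfolding X_def by (simp add: doubleton_eq_iff)
  have Xe: "\<forall>e\<in>X. \<exists>u v. e = {u, v} \<and> u \<noteq> v \<and> 0 < u \<and> u < n \<and> 0 < v \<and> v < n"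
    unfolding X_def using n by (auto intro!: edge_ex)
  have hb: "\<forall>v. card {e \<in> X. v \<in> e} \<le> 4" unfolding hX by simp
  note tf = target_facts[OF _ fX Xe hb, folded G]
  have n1: "1 \<le> n" using n by simp
  show "tetracyclic n (H4 n)" unfolding conn_k_cyclic_def using tf(1-3)[OF n1] cX n by simp
  define h where "h = (\<lambda>v. card {e \<in> X. v \<in> e})"
  have P1: "Pc h ({..<n} - {0}) 1 = 5"
    by (subst Pc_eq[where S="{1,2,3,4,5}"]) (use n in \<open>auto simp: h_def hX split: if_splits\<close>)
  have P2: "Pc h ({..<n} - {0}) 2 = 1"
    by (subst Pc_eq[where S="{1}"]) (use n in \<open>auto simp: h_def hX split: if_splits\<close>)
  have P3: "Pc h ({..<n} - {0}) 3 = 1"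
    by (subst Pc_eq[where S="{1}"]) (use n in \<open>auto simp: h_def hX split: if_splits\<close>)
  have P4: "Pc h ({..<n} - {0}) 4 = 1"
    by (subst Pc_eq[where S="{1}"]) (use n in \<open>auto simp: h_def hX split: if_splits\<close>)
  have inner: "(\<Sum>e\<in>X. pw \<alpha> (\<Sum>x\<in>e. h x + 1)) = 4 * pw \<alpha> 7"
    unfolding X_def by (simp add: doubleton_eq_iff h_def hX eval_nat_numeral)
  show "chi \<alpha> (H4 n) = real (n - 1) * pw \<alpha> n + real 5 * Dd \<alpha> n 1 + Dd \<alpha> n 2 + Dd \<alpha> n 3 + Dd \<alpha> n 4 + 4 * pw \<alpha> 7"
    using tf(4)[OF n1] P1 P2 P3 P4 inner unfolding h_def by simp
qed

lemma H5_facts: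
  shows "tetracyclic 5 (H5 5)"
    "chi \<alpha> (H5 5) = real (5 - 1) * pw \<alpha> 5 + real 4 * Dd \<alpha> 5 1 + real 3 * Dd \<alpha> 5 2 + Dd \<alpha> 5 3 + 2 * pw \<alpha> 7 + 2 * pw \<alpha> 6"
proof -
  define n where "n = (5::nat)"
  have n: "5 \<le> n" unfolding n_def by simp
  define X :: "nat set set" where "X = {{1, 2}, {2, 3}, {3, 1}, {1, 4}}"
  have G: "H5 n = star n \<union> X" unfolding H5_def X_def by simp
  have hX: "card {e \<in> X. v \<in> e} = (if v = 4 then 1 else (if v = 2 \<or> v = 3 then 2 else (if v = 1 then 3 else 0)))" for v
  proof -
    have "{e \<in> X. v \<in> e} = (if v = 1 then {{1, 2}, {3, 1}, {1, 4}} else (if v = 2 then {{1, 2}, {2, 3}} else (if v = 3 then {{2, 3}, {3, 1}} else (if v = 4 then {{1, 4}} else {}))))"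
      unfolding X_def by auto
    then show ?thesis unfolding X_def by (simp add: doubleton_eq_iff)
  qed
  have fX: "finite X" unfolding X_def by simp
  have cX: "card X = 4" unfolding X_def by (simp add: doubleton_eq_iff)
  have Xe: "\<forall>e\<in>X. \<exists>u v. e = {u, v} \<and> u \<noteq> v \<and> 0 < u \<and> u < n \<and> 0 < v \<and> v < n"
    unfolding X_def using n by (auto intro!: edge_ex)
  have hb: "\<forall>v. card {e \<in> X. v \<in> e} \<le> 4" unfolding hX by simp
  note tf = target_facts[OF _ fX Xe hb, folded G]
  have n1: "1 \<le> n" using n by simp
  have "tetracyclic n (H5 n)" unfolding conn_k_cyclic_def using tf(1-3)[OF n1] cX n by simp
  then show "tetracyclic 5 (H5 5)" unfolding n_def .
  define h where "h = (\<lambda>v. card {e \<in> X. v \<in> e})"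
  have P1: "Pc h ({..<n} - {0}) 1 = 4"
    by (subst Pc_eq[where S="{1,2,3,4}"]) (use n in \<open>auto simp: h_def hX split: if_splits\<close>)
  have P2: "Pc h ({..<n} - {0}) 2 = 3"
    by (subst Pc_eq[where S="{1,2,3}"]) (use n in \<open>auto simp: h_def hX split: if_splits\<close>)
  have P3: "Pc h ({..<n} - {0}) 3 = 1"
    by (subst Pc_eq[where S="{1}"]) (use n in \<open>auto simp: h_def hX split: if_splits\<close>)
  have P4: "Pc h ({..<n} - {0}) 4 = 0"
    by (subst Pc_eq[where S="{}"]) (use n in \<open>auto simp: h_def hX split: if_splits\<close>)
  have inner: "(\<Sum>e\<in>X. pw \<alpha> (\<Sum>x\<in>e. h x + 1)) = 2 * pw \<alpha> 7 + 2 * pw \<alpha> 6"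
    unfolding X_def by (simp add: doubleton_eq_iff h_def hX eval_nat_numeral)
  have "chi \<alpha> (H5 n) = real (n - 1) * pw \<alpha> n + real 4 * Dd \<alpha> n 1 + real 3 * Dd \<alpha> n 2 + Dd \<alpha> n 3 + 2 * pw \<alpha> 7 + 2 * pw \<alpha> 6"
    using tf(4)[OF n1] P1 P2 P3 P4 inner unfolding h_def by simp
  then show "chi \<alpha> (H5 5) = real (5 - 1) * pw \<alpha> 5 + real 4 * Dd \<alpha> 5 1 + real 3 * Dd \<alpha> 5 2 + Dd \<alpha> 5 3 + 2 * pw \<alpha> 7 + 2 * pw \<alpha> 6" unfolding n_def by simp
qed

lemma class_bound:
  assumes a: "1 \<le> \<alpha>" and c: "conn_k_cyclic k n E" and k4: "k \<le> 4" and n: "1 \<le> n"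
  obtains P :: "nat \<Rightarrow> nat" and I :: real where
    "chi \<alpha> E \<le> real (n - 1) * pw \<alpha> n + real (P 1) * Dd \<alpha> n 1 + real (P 2) * Dd \<alpha> n 2
        + real (P 3) * Dd \<alpha> n 3 + real (P 4) * Dd \<alpha> n 4 + I"
    "I \<le> real k * pw \<alpha> (k + 3)"
    "P 1 + P 2 + P 3 + P 4 = 2 * k"
    "P 4 \<le> P 3" "P 3 \<le> P 2" "P 2 \<le> P 1" "P 1 \<le> n - 1"
    "\<forall>j. k < j \<longrightarrow> P j = 0"
    "\<forall>a b. k + 1 < a + b \<longrightarrow> 1 \<le> P a \<longrightarrow> P b \<le> 1"
    "k = 4 \<Longrightarrow> n = 5 \<Longrightarrow> I \<le> 2 * pw \<alpha> 7 + 2 * pw \<alpha> 6"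
proof -
  have sg: "simple_graph n E" and cn: "connected_graph n E" and cE: "card E + 1 = n + k"
    using c unfolding conn_k_cyclic_def by auto
  have w: "0 < n" using n by simp
  obtain E' where E': "simple_graph n E'" "card E' = card E" "\<forall>v<n. v \<noteq> 0 \<longrightarrow> {0, v} \<in> E'"
    "chi \<alpha> E \<le> chi \<alpha> E'"
    using reduce[OF a sg cn w] by blast
  have cE': "card E' + 1 = n + k" using cE E'(2) by simp
  obtain P I where PI: "chi \<alpha> E' = real (n - 1) * pw \<alpha> n + real (P 1) * Dd \<alpha> n 1 + real (P 2) * Dd \<alpha> n 2
        + real (P 3) * Dd \<alpha> n 3 + real (P 4) * Dd \<alpha> n 4 + I"
    "I \<le> real k * pw \<alpha> (k + 3)"
    "P 1 + P 2 + P 3 + P 4 = 2 * k"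
    "P 4 \<le> P 3" "P 3 \<le> P 2" "P 2 \<le> P 1" "P 1 \<le> n - 1"
    "\<forall>j. k < j \<longrightarrow> P j = 0"
    "\<forall>a b. k + 1 < a + b \<longrightarrow> 1 \<le> P a \<longrightarrow> P b \<le> 1"
    "k = 4 \<Longrightarrow> n = 5 \<Longrightarrow> I \<le> 2 * pw \<alpha> 7 + 2 * pw \<alpha> 6"
    using dom_analysis[OF a E'(1) w E'(3) cE' k4] by blast
  show ?thesis using that[of P I] PI E'(4) by simp
qed

lemma D_mono:
  assumes a: "1 \<le> \<alpha>" and n: "1 \<le> n" and j: "1 \<le> j"
  shows "Dd \<alpha> n j \<le> Dd \<alpha> n (j + 1)"
proof -
  have "pw \<alpha> ((n + j - 1) + 1) - pw \<alpha> (n + j - 1) \<le> pw \<alpha> ((n + j - 1) + 2) - pw \<alpha> ((n + j - 1) + 1)"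
    using pw_D_mono[OF a, of "n + j - 1"] n j by simp
  moreover have "(n + j - 1) + 1 = n + j" "(n + j - 1) + 2 = n + (j + 1)" using n j by auto
  ultimately show ?thesis unfolding Dd_def by simp
qed

lemma D12: assumes a: "1 \<le> \<alpha>" and n: "1 \<le> n" shows "Dd \<alpha> n 1 \<le> Dd \<alpha> n 2"
proof -
  have "Dd \<alpha> n 1 \<le> Dd \<alpha> n (1 + 1)" by (rule D_mono[OF a n]) simp
  moreover have e: "(1::nat) + 1 = 2" by simp
  ultimately show ?thesis by (simp only: e)
qed

lemma D23: assumes a: "1 \<le> \<alpha>" and n: "1 \<le> n" shows "Dd \<alpha> n 2 \<le> Dd \<alpha> n 3"
proof -
  have "Dd \<alpha> n 2 \<le> Dd \<alpha> n (2 + 1)" by (rule D_mono[OF a n]) simp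
  moreover have e: "(2::nat) + 1 = 3" by simp
  ultimately show ?thesis by (simp only: e)
qed

lemma D34: assumes a: "1 \<le> \<alpha>" and n: "1 \<le> n" shows "Dd \<alpha> n 3 \<le> Dd \<alpha> n 4"
proof -
  have "Dd \<alpha> n 3 \<le> Dd \<alpha> n (3 + 1)" by (rule D_mono[OF a n]) simp
  moreover have e: "(3::nat) + 1 = 4" by simp
  ultimately show ?thesis by (simp only: e)
qed

lemma D_pos:
  assumes a: "1 \<le> \<alpha>"
  shows "0 \<le> Dd \<alpha> n 1"
  unfolding Dd_def using pw_mono[of \<alpha> n "n+1"] a by simp

lemma D_14:
  assumes a: "1 \<le> \<alpha>" and n: "4 \<le> n"
  shows "2 * Dd \<alpha> n 2 \<le> Dd \<alpha> n 1 + Dd \<alpha> n 4"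
  using RD4[OF a n] unfolding Dd_def by (simp add: add.commute)

lemma D_3rd:
  assumes n: "1 \<le> n"
  shows "\<exists>z>0. Dd \<alpha> n 1 - 2 * Dd \<alpha> n 2 + Dd \<alpha> n 3 = f3 \<alpha> z"
proof -
  obtain z where "z > 0" "pw \<alpha> (n+3) - 3 * pw \<alpha> (n+2) + 3 * pw \<alpha> (n+1) - pw \<alpha> n = f3 \<alpha> z"
    using RD3[OF n] by blast
  moreover have "Dd \<alpha> n 1 - 2 * Dd \<alpha> n 2 + Dd \<alpha> n 3 = pw \<alpha> (n+3) - 3 * pw \<alpha> (n+2) + 3 * pw \<alpha> (n+1) - pw \<alpha> n"
    unfolding Dd_def by (simp add: add.commute)
  ultimately show ?thesis by auto
qed

lemma lin4:
  fixes p1 p2 p3 p4 :: nat and D1 D2 D3 D4 R a b c e :: real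
  assumes "real p1 = a" "real p2 = b" "real p3 = c" "real p4 = e" "a * D1 + b * D2 + c * D3 + e * D4 \<le> R"
  shows "real p1 * D1 + real p2 * D2 + real p3 * D3 + real p4 * D4 \<le> R"
  using assms by simp

lemma fin5:
  fixes p1 p2 p3 p4 :: nat and D1 D2 D3 D4 :: real
  assumes d: "D1 \<le> D2" "D2 \<le> D3" "D3 \<le> D4" "2 * D2 \<le> D1 + D4" "0 \<le> D1"
    and p: "p1 + p2 + p3 + p4 = 8" "p4 \<le> p3" "p3 \<le> p2" "p2 \<le> p1" "p3 \<le> 1" "1 \<le> p4 \<longrightarrow> p2 \<le> 1"
  shows "real p1 * D1 + real p2 * D2 + real p3 * D3 + real p4 * D4 \<le> 5 * D1 + D2 + D3 + D4"
proof (cases "p4 = 0")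
  case False
  have h2: "p2 \<le> 1" using p False by simp
  show ?thesis by (rule lin4[where a=5 and b=1 and c=1 and e=1]; insert h2 p False; simp?; linarith)
next
  case p4: True
  show ?thesis
  proof (cases "p3 = 0")
    case p3: True
    have "p2 \<le> 4" using p p3 p4 by linarith
    then have "p2 = 0 \<or> p2 = 1 \<or> p2 = 2 \<or> p2 = 3 \<or> p2 = 4" by auto
    then show ?thesis
    proof (elim disjE)
      assume h2: "p2 = 0" show ?thesis by (rule lin4[where a=8 and b=0 and c=0 and e=0]; insert h2 p p3 p4 d; simp?; linarith)
    next
      assume h2: "p2 = 1" show ?thesis by (rule lin4[where a=7 and b=1 and c=0 and e=0]; insert h2 p p3 p4 d; simp?; linarith)
    next
      assume h2: "p2 = 2" show ?thesis by (rule lin4[where a=6 and b=2 and c=0 and e=0]; insert h2 p p3 p4 d; simp?; linarith)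
    next
      assume h2: "p2 = 3" show ?thesis by (rule lin4[where a=5 and b=3 and c=0 and e=0]; insert h2 p p3 p4 d; simp?; linarith)
    next
      assume h2: "p2 = 4" show ?thesis by (rule lin4[where a=4 and b=4 and c=0 and e=0]; insert h2 p p3 p4 d; simp?; linarith)
    qed
  next
    case False
    then have p3: "p3 = 1" using p by simp
    have "p2 \<le> 3" "1 \<le> p2" using p p3 p4 by linarith+
    then have "p2 = 1 \<or> p2 = 2 \<or> p2 = 3" by auto
    then show ?thesis
    proof (elim disjE)
      assume h2: "p2 = 1" show ?thesis by (rule lin4[where a=6 and b=1 and c=1 and e=0]; insert h2 p p3 p4 d; simp?; linarith)
    next
      assume h2: "p2 = 2" show ?thesis by (rule lin4[where a=5 and b=2 and c=1 and e=0]; insert h2 p p3 p4 d; simp?; linarith)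
    next
      assume h2: "p2 = 3" show ?thesis by (rule lin4[where a=4 and b=3 and c=1 and e=0]; insert h2 p p3 p4 d; simp?; linarith)
    qed
  qed
qed

lemma fin3:
  fixes p1 p2 p3 p4 :: nat and D1 D2 D3 D4 :: real
  assumes d: "D1 \<le> D2"
    and p: "p1 + p2 + p3 + p4 = 4" "p3 = 0" "p4 = 0" "p2 \<le> 1"
  shows "real p1 * D1 + real p2 * D2 + real p3 * D3 + real p4 * D4 \<le> 3 * D1 + D2"
proof (cases "p2 = 0")
  case True
  show ?thesis by (rule lin4[where a=4 and b=0 and c=0 and e=0]; insert True p d; simp?; linarith)
next
  case False
  show ?thesis by (rule lin4[where a=3 and b=1 and c=0 and e=0]; insert False p d; simp?; linarith)
qed

lemma fin4:
  fixes p1 p2 p3 p4 :: nat and D1 D2 D3 D4 :: real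
  assumes d: "D1 \<le> D2" "D2 \<le> D3" "0 \<le> D1"
    and p: "p1 + p2 + p3 + p4 = 6" "p4 = 0" "p3 \<le> p2" "p2 \<le> p1" "p3 \<le> 1" "1 \<le> p3 \<longrightarrow> p2 \<le> 1"
  shows "real p1 * D1 + real p2 * D2 + real p3 * D3 + real p4 * D4 \<le> 4 * D1 + D2 + D3
    \<or> real p1 * D1 + real p2 * D2 + real p3 * D3 + real p4 * D4 = 3 * D1 + 3 * D2"
proof (cases "p3 = 0")
  case False
  then have h3: "p3 = 1" "p2 = 1" using p by auto
  have "real p1 * D1 + real p2 * D2 + real p3 * D3 + real p4 * D4 \<le> 4 * D1 + D2 + D3"
    by (rule lin4[where a=4 and b=1 and c=1 and e=0]; insert h3 p d; simp?; linarith)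
  then show ?thesis by simp
next
  case c3: True
  have "p2 \<le> 3" using p c3 by linarith
  then have "p2 = 0 \<or> p2 = 1 \<or> p2 = 2 \<or> p2 = 3" by auto
  then show ?thesis
  proof (elim disjE)
    assume h2: "p2 = 3"
    have "real p1 * D1 + real p2 * D2 + real p3 * D3 + real p4 * D4 = 3 * D1 + 3 * D2"
    proof -
      have e: "p1 = 3" "p3 = 0" "p4 = 0" using h2 c3 p by linarith+
      show ?thesis unfolding e h2 by simp
    qed
    then show ?thesis by simp
  next
    assume h2: "p2 = 0"
    have "real p1 * D1 + real p2 * D2 + real p3 * D3 + real p4 * D4 \<le> 4 * D1 + D2 + D3"
      by (rule lin4[where a=6 and b=0 and c=0 and e=0]; insert h2 c3 p d; simp?; linarith)
    then show ?thesis by simp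
  next
    assume h2: "p2 = 1"
    have "real p1 * D1 + real p2 * D2 + real p3 * D3 + real p4 * D4 \<le> 4 * D1 + D2 + D3"
      by (rule lin4[where a=5 and b=1 and c=0 and e=0]; insert h2 c3 p d; simp?; linarith)
    then show ?thesis by simp
  next
    assume h2: "p2 = 2"
    have "real p1 * D1 + real p2 * D2 + real p3 * D3 + real p4 * D4 \<le> 4 * D1 + D2 + D3"
      by (rule lin4[where a=4 and b=2 and c=0 and e=0]; insert h2 c3 p d; simp?; linarith)
    then show ?thesis by simp
  qed
qed

lemma fin6:
  fixes p1 p2 p3 p4 :: nat and D1 D2 D3 D4 :: real
  assumes d: "D2 \<le> D3"
    and p: "p1 + p2 + p3 + p4 = 8" "p4 \<le> p3" "p3 \<le> p2" "p2 \<le> p1" "p3 \<le> 1" "1 \<le> p4 \<longrightarrow> p2 \<le> 1" "p1 \<le> 4"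
  shows "real p1 * D1 + real p2 * D2 + real p3 * D3 + real p4 * D4 \<le> 4 * D1 + 3 * D2 + D3"
proof -
  have h4: "p4 = 0" using p by auto
  show ?thesis
  proof (cases "p3 = 0")
    case True
    show ?thesis by (rule lin4[where a=4 and b=4 and c=0 and e=0]; insert True h4 p d; simp?; linarith)
  next
    case False
    show ?thesis by (rule lin4[where a=4 and b=3 and c=1 and e=0]; insert False h4 p d; simp?; linarith)
  qed
qed

lemma part1:
  assumes a: "1 \<le> \<alpha>" and n: "1 \<le> n"
  shows "is_max \<alpha> (is_tree n) (star n)"
  unfolding is_max_def
proof (intro conjI allI impI)
  show "is_tree n (star n)" using star_facts(1)[OF n] .
  fix E assume E: "is_tree n E"
  have kk: "(0::nat) \<le> 4" by simp
  have n1: "1 \<le> n" using n by simp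
  obtain P :: "nat \<Rightarrow> nat" and I :: real where PI0: "chi \<alpha> E \<le> real (n - 1) * pw \<alpha> n + real (P 1) * Dd \<alpha> n 1 + real (P 2) * Dd \<alpha> n 2
        + real (P 3) * Dd \<alpha> n 3 + real (P 4) * Dd \<alpha> n 4 + I"
    "I \<le> real 0 * pw \<alpha> (0 + 3)"
    "P 1 + P 2 + P 3 + P 4 = 2 * 0"
    "P 4 \<le> P 3" "P 3 \<le> P 2" "P 2 \<le> P 1" "P 1 \<le> n - 1"
    "\<forall>j. 0 < j \<longrightarrow> P j = 0"
    "\<forall>a b. 0 + 1 < a + b \<longrightarrow> 1 \<le> P a \<longrightarrow> P b \<le> 1"
    "(0::nat) = 4 \<Longrightarrow> n = 5 \<Longrightarrow> I \<le> 2 * pw \<alpha> 7 + 2 * pw \<alpha> 6"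
    by (fact class_bound[OF a E kk n1])
  note PI = PI0(1) PI0(2) PI0(8)

  have "P 1 = 0" "P 2 = 0" "P 3 = 0" "P 4 = 0" using PI(3) by auto
  then show "chi \<alpha> E \<le> chi \<alpha> (star n)" using PI(1,2) star_facts(2)[OF n] by simp
qed

lemma part2:
  assumes a: "1 \<le> \<alpha>" and n: "3 \<le> n"
  shows "is_max \<alpha> (unicyclic n) (star_plus n)"
  unfolding is_max_def
proof (intro conjI allI impI)
  show "unicyclic n (star_plus n)" using starplus_facts(1)[OF n] .
  fix E assume E: "unicyclic n E"
  have kk: "(1::nat) \<le> 4" by simp
  have n1: "1 \<le> n" using n by simp
  obtain P :: "nat \<Rightarrow> nat" and I :: real where PI0: "chi \<alpha> E \<le> real (n - 1) * pw \<alpha> n + real (P 1) * Dd \<alpha> n 1 + real (P 2) * Dd \<alpha> n 2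
        + real (P 3) * Dd \<alpha> n 3 + real (P 4) * Dd \<alpha> n 4 + I"
    "I \<le> real 1 * pw \<alpha> (1 + 3)"
    "P 1 + P 2 + P 3 + P 4 = 2 * 1"
    "P 4 \<le> P 3" "P 3 \<le> P 2" "P 2 \<le> P 1" "P 1 \<le> n - 1"
    "\<forall>j. 1 < j \<longrightarrow> P j = 0"
    "\<forall>a b. 1 + 1 < a + b \<longrightarrow> 1 \<le> P a \<longrightarrow> P b \<le> 1"
    "(1::nat) = 4 \<Longrightarrow> n = 5 \<Longrightarrow> I \<le> 2 * pw \<alpha> 7 + 2 * pw \<alpha> 6"
    by (fact class_bound[OF a E kk n1])
  note PI = PI0(1) PI0(2) PI0(8) PI0(3)

  have "P 2 = 0" "P 3 = 0" "P 4 = 0" using PI(3) by auto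
  then have "P 1 = 2" using PI(4) by simp
  then show "chi \<alpha> E \<le> chi \<alpha> (star_plus n)" using PI(1,2) starplus_facts(2)[OF n] \<open>P 2 = 0\<close> \<open>P 3 = 0\<close> \<open>P 4 = 0\<close>
    by simp
qed

lemma part3:
  assumes a: "1 \<le> \<alpha>" and n: "4 \<le> n"
  shows "is_max \<alpha> (bicyclic n) (B1 n)"
  unfolding is_max_def
proof (intro conjI allI impI)
  show "bicyclic n (B1 n)" using B1_facts(1)[OF n] .
  fix E assume E: "bicyclic n E"
  have kk: "(2::nat) \<le> 4" by simp
  have n1: "1 \<le> n" using n by simp
  obtain P :: "nat \<Rightarrow> nat" and I :: real where PI0: "chi \<alpha> E \<le> real (n - 1) * pw \<alpha> n + real (P 1) * Dd \<alpha> n 1 + real (P 2) * Dd \<alpha> n 2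
        + real (P 3) * Dd \<alpha> n 3 + real (P 4) * Dd \<alpha> n 4 + I"
    "I \<le> real 2 * pw \<alpha> (2 + 3)"
    "P 1 + P 2 + P 3 + P 4 = 2 * 2"
    "P 4 \<le> P 3" "P 3 \<le> P 2" "P 2 \<le> P 1" "P 1 \<le> n - 1"
    "\<forall>j. 2 < j \<longrightarrow> P j = 0"
    "\<forall>a b. 2 + 1 < a + b \<longrightarrow> 1 \<le> P a \<longrightarrow> P b \<le> 1"
    "(2::nat) = 4 \<Longrightarrow> n = 5 \<Longrightarrow> I \<le> 2 * pw \<alpha> 7 + 2 * pw \<alpha> 6"
    by (fact class_bound[OF a E kk n1])
  note PI = PI0(1) PI0(2) PI0(8) PI0(3) PI0(9)
  have z: "P 3 = 0" "P 4 = 0" using PI(3) by auto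
  have "P 2 \<le> 1" using PI(5)[rule_format, of 2 2] by (cases "1 \<le> P 2") auto
  then have v: "real (P 1) * Dd \<alpha> n 1 + real (P 2) * Dd \<alpha> n 2 + real (P 3) * Dd \<alpha> n 3 + real (P 4) * Dd \<alpha> n 4
     \<le> 3 * Dd \<alpha> n 1 + Dd \<alpha> n 2"
    using fin3[OF D12[OF a n1]] PI(4) z by simp
  show "chi \<alpha> E \<le> chi \<alpha> (B1 n)" using PI(1,2) B1_facts(2)[OF n, of \<alpha>] v by simp
qed

lemma part4max:
  assumes a: "1 \<le> \<alpha>" and n: "5 \<le> n" and E: "tricyclic n E"
  shows "chi \<alpha> E \<le> max (chi \<alpha> (G4 n)) (chi \<alpha> (G5 n))"
proof -
  have kk: "(3::nat) \<le> 4" by simp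
  have n1: "1 \<le> n" using n by simp
  obtain P :: "nat \<Rightarrow> nat" and I :: real where PI0: "chi \<alpha> E \<le> real (n - 1) * pw \<alpha> n + real (P 1) * Dd \<alpha> n 1 + real (P 2) * Dd \<alpha> n 2
        + real (P 3) * Dd \<alpha> n 3 + real (P 4) * Dd \<alpha> n 4 + I"
    "I \<le> real 3 * pw \<alpha> (3 + 3)"
    "P 1 + P 2 + P 3 + P 4 = 2 * 3"
    "P 4 \<le> P 3" "P 3 \<le> P 2" "P 2 \<le> P 1" "P 1 \<le> n - 1"
    "\<forall>j. 3 < j \<longrightarrow> P j = 0"
    "\<forall>a b. 3 + 1 < a + b \<longrightarrow> 1 \<le> P a \<longrightarrow> P b \<le> 1"
    "(3::nat) = 4 \<Longrightarrow> n = 5 \<Longrightarrow> I \<le> 2 * pw \<alpha> 7 + 2 * pw \<alpha> 6"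
    by (fact class_bound[OF a E kk n1])
  note PI = PI0(1) PI0(2) PI0(8) PI0(3) PI0(9) PI0(5) PI0(6)
  have z: "P 4 = 0" using PI(3) by auto
  have p3: "P 3 \<le> 1" using PI(5)[rule_format, of 3 3] by (cases "1 \<le> P 3") auto
  have p32: "1 \<le> P 3 \<longrightarrow> P 2 \<le> 1" using PI(5)[rule_format, of 3 2] by auto
  have v: "real (P 1) * Dd \<alpha> n 1 + real (P 2) * Dd \<alpha> n 2 + real (P 3) * Dd \<alpha> n 3 + real (P 4) * Dd \<alpha> n 4
     \<le> 4 * Dd \<alpha> n 1 + Dd \<alpha> n 2 + Dd \<alpha> n 3 \<or>
     real (P 1) * Dd \<alpha> n 1 + real (P 2) * Dd \<alpha> n 2 + real (P 3) * Dd \<alpha> n 3 + real (P 4) * Dd \<alpha> n 4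
     = 3 * Dd \<alpha> n 1 + 3 * Dd \<alpha> n 2"
    by (rule fin4[OF D12[OF a n1] D23[OF a n1] D_pos[OF a]]) (use PI(4,6,7) z p3 p32 in simp_all)
  note g4 = G4_facts(2)[OF n, of \<alpha>] and g5 = G5_facts(2)[OF n, of \<alpha>]
  from v show ?thesis
  proof
    assume h: "real (P 1) * Dd \<alpha> n 1 + real (P 2) * Dd \<alpha> n 2 + real (P 3) * Dd \<alpha> n 3 + real (P 4) * Dd \<alpha> n 4
     \<le> 4 * Dd \<alpha> n 1 + Dd \<alpha> n 2 + Dd \<alpha> n 3"
    have "chi \<alpha> E \<le> chi \<alpha> (G4 n)" using PI(1,2) g4 h by simp
    then show ?thesis by simp
  next
    assume h: "real (P 1) * Dd \<alpha> n 1 + real (P 2) * Dd \<alpha> n 2 + real (P 3) * Dd \<alpha> n 3 + real (P 4) * Dd \<alpha> n 4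
     = 3 * Dd \<alpha> n 1 + 3 * Dd \<alpha> n 2"
    have "chi \<alpha> E \<le> chi \<alpha> (G5 n)" using PI(1,2) g5 h by simp
    then show ?thesis by simp
  qed
qed

lemma part4cmp:
  assumes n: "5 \<le> n"
  shows "chi \<alpha> (G4 n) - chi \<alpha> (G5 n) = Dd \<alpha> n 1 - 2 * Dd \<alpha> n 2 + Dd \<alpha> n 3"
  using G4_facts(2)[OF n, of \<alpha>] G5_facts(2)[OF n, of \<alpha>] by simp

lemma part5:
  assumes a: "1 \<le> \<alpha>" and n: "6 \<le> n"
  shows "is_max \<alpha> (tetracyclic n) (H4 n)"
  unfolding is_max_def
proof (intro conjI allI impI)
  show "tetracyclic n (H4 n)" using H4_facts(1)[OF n] .
  fix E assume E: "tetracyclic n E"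
  have kk: "(4::nat) \<le> 4" by simp
  have n1: "1 \<le> n" using n by simp
  obtain P :: "nat \<Rightarrow> nat" and I :: real where PI0: "chi \<alpha> E \<le> real (n - 1) * pw \<alpha> n + real (P 1) * Dd \<alpha> n 1 + real (P 2) * Dd \<alpha> n 2
        + real (P 3) * Dd \<alpha> n 3 + real (P 4) * Dd \<alpha> n 4 + I"
    "I \<le> real 4 * pw \<alpha> (4 + 3)"
    "P 1 + P 2 + P 3 + P 4 = 2 * 4"
    "P 4 \<le> P 3" "P 3 \<le> P 2" "P 2 \<le> P 1" "P 1 \<le> n - 1"
    "\<forall>j. 4 < j \<longrightarrow> P j = 0"
    "\<forall>a b. 4 + 1 < a + b \<longrightarrow> 1 \<le> P a \<longrightarrow> P b \<le> 1"
    "(4::nat) = 4 \<Longrightarrow> n = 5 \<Longrightarrow> I \<le> 2 * pw \<alpha> 7 + 2 * pw \<alpha> 6"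
    by (fact class_bound[OF a E kk n1])
  note PI = PI0(1) PI0(2) PI0(3) PI0(9) PI0(4) PI0(5) PI0(6)
  have p3: "P 3 \<le> 1" using PI(4)[rule_format, of 3 3] by (cases "1 \<le> P 3") auto
  have p42: "1 \<le> P 4 \<longrightarrow> P 2 \<le> 1" using PI(4)[rule_format, of 4 2] by auto
  have n4: "4 \<le> n" using n by simp
  have v: "real (P 1) * Dd \<alpha> n 1 + real (P 2) * Dd \<alpha> n 2 + real (P 3) * Dd \<alpha> n 3 + real (P 4) * Dd \<alpha> n 4
     \<le> 5 * Dd \<alpha> n 1 + Dd \<alpha> n 2 + Dd \<alpha> n 3 + Dd \<alpha> n 4"
    by (rule fin5[OF D12[OF a n1] D23[OF a n1] D34[OF a n1] D_14[OF a n4] D_pos[OF a]])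
      (use PI(3,5,6,7) p3 p42 in simp_all)
  show "chi \<alpha> E \<le> chi \<alpha> (H4 n)" using PI(1,2) H4_facts(2)[OF n, of \<alpha>] v by simp
qed

lemma part6:
  assumes a: "1 \<le> \<alpha>"
  shows "is_max \<alpha> (tetracyclic 5) (H5 5)"
  unfolding is_max_def
proof (intro conjI allI impI)
  show "tetracyclic 5 (H5 5)" using H5_facts(1) .
  fix E assume E: "tetracyclic 5 E"
  have kk: "(4::nat) \<le> 4" by simp
  have n1: "1 \<le> (5::nat)" by simp
  obtain P :: "nat \<Rightarrow> nat" and I :: real where PI0: "chi \<alpha> E \<le> real (5 - 1) * pw \<alpha> 5 + real (P 1) * Dd \<alpha> 5 1 + real (P 2) * Dd \<alpha> 5 2
        + real (P 3) * Dd \<alpha> 5 3 + real (P 4) * Dd \<alpha> 5 4 + I"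
    "I \<le> real 4 * pw \<alpha> (4 + 3)"
    "P 1 + P 2 + P 3 + P 4 = 2 * 4"
    "P 4 \<le> P 3" "P 3 \<le> P 2" "P 2 \<le> P 1" "P 1 \<le> 5 - 1"
    "\<forall>j. 4 < j \<longrightarrow> P j = 0"
    "\<forall>a b. 4 + 1 < a + b \<longrightarrow> 1 \<le> P a \<longrightarrow> P b \<le> 1"
    "(4::nat) = 4 \<Longrightarrow> (5::nat) = 5 \<Longrightarrow> I \<le> 2 * pw \<alpha> 7 + 2 * pw \<alpha> 6"
    by (fact class_bound[OF a E kk n1])
  note PI = PI0(1) PI0(10)[OF refl refl] PI0(3) PI0(9) PI0(4) PI0(5) PI0(6) PI0(7)
  have p3: "P 3 \<le> 1" using PI(4)[rule_format, of 3 3] by (cases "1 \<le> P 3") auto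
  have p42: "1 \<le> P 4 \<longrightarrow> P 2 \<le> 1" using PI(4)[rule_format, of 4 2] by auto
  have v: "real (P 1) * Dd \<alpha> 5 1 + real (P 2) * Dd \<alpha> 5 2 + real (P 3) * Dd \<alpha> 5 3 + real (P 4) * Dd \<alpha> 5 4
     \<le> 4 * Dd \<alpha> 5 1 + 3 * Dd \<alpha> 5 2 + Dd \<alpha> 5 3"
    by (rule fin6[OF D23[OF a n1]]) (use PI(3,5,6,7,8) p3 p42 in simp_all)
  show "chi \<alpha> E \<le> chi \<alpha> (H5 5)" using PI(1,2) H5_facts(2)[of \<alpha>] v by simp
qed

theorem theorem6:
  fixes \<alpha> :: real
  assumes "\<alpha> \<ge> 1"
  shows "(\<forall>n\<ge>1. is_max \<alpha> (is_tree n) (star n))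
       \<and> (\<forall>n\<ge>3. is_max \<alpha> (unicyclic n) (star_plus n))
       \<and> (\<forall>n\<ge>4. is_max \<alpha> (bicyclic n) (B1 n))
       \<and> (\<forall>n\<ge>5. tricyclic n (G4 n) \<and> tricyclic n (G5 n)
            \<and> (\<forall>E. tricyclic n E \<longrightarrow> chi \<alpha> E \<le> max (chi \<alpha> (G4 n)) (chi \<alpha> (G5 n)))
            \<and> (1 < \<alpha> \<and> \<alpha> < 2 \<longrightarrow> chi \<alpha> (G4 n) < chi \<alpha> (G5 n))
            \<and> (\<alpha> > 2 \<longrightarrow> chi \<alpha> (G4 n) > chi \<alpha> (G5 n))
            \<and> (\<alpha> = 1 \<or> \<alpha> = 2 \<longrightarrow> chi \<alpha> (G4 n) = chi \<alpha> (G5 n)))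
       \<and> (\<forall>n\<ge>6. is_max \<alpha> (tetracyclic n) (H4 n))
       \<and> is_max \<alpha> (tetracyclic 5) (H5 5)"
proof -
  have a: "1 \<le> \<alpha>" using assms by simp
  have q1: "\<forall>n\<ge>1. is_max \<alpha> (is_tree n) (star n)" using part1[OF a] by blast
  have q2: "\<forall>n\<ge>3. is_max \<alpha> (unicyclic n) (star_plus n)" using part2[OF a] by blast
  have q3: "\<forall>n\<ge>4. is_max \<alpha> (bicyclic n) (B1 n)" using part3[OF a] by blast
  have q4: "\<forall>n\<ge>5. tricyclic n (G4 n) \<and> tricyclic n (G5 n)
            \<and> (\<forall>E. tricyclic n E \<longrightarrow> chi \<alpha> E \<le> max (chi \<alpha> (G4 n)) (chi \<alpha> (G5 n)))
            \<and> (1 < \<alpha> \<and> \<alpha> < 2 \<longrightarrow> chi \<alpha> (G4 n) < chi \<alpha> (G5 n))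
            \<and> (\<alpha> > 2 \<longrightarrow> chi \<alpha> (G4 n) > chi \<alpha> (G5 n))
            \<and> (\<alpha> = 1 \<or> \<alpha> = 2 \<longrightarrow> chi \<alpha> (G4 n) = chi \<alpha> (G5 n))"
  proof (intro allI impI)
    fix n :: nat assume n: "5 \<le> n"
    have n1: "1 \<le> n" using n by simp
    obtain z where z: "z > 0" "Dd \<alpha> n 1 - 2 * Dd \<alpha> n 2 + Dd \<alpha> n 3 = f3 \<alpha> z"
      using D_3rd[OF n1] by blast
    have df: "chi \<alpha> (G4 n) - chi \<alpha> (G5 n) = f3 \<alpha> z" using part4cmp[OF n] z(2) by simp
    have s1: "1 < \<alpha> \<and> \<alpha> < 2 \<longrightarrow> chi \<alpha> (G4 n) < chi \<alpha> (G5 n)" using f3_sign(1)[OF z(1), of \<alpha>] df by auto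
    have s2: "\<alpha> > 2 \<longrightarrow> chi \<alpha> (G4 n) > chi \<alpha> (G5 n)" using f3_sign(2)[OF z(1), of \<alpha>] df by auto
    have s3: "\<alpha> = 1 \<or> \<alpha> = 2 \<longrightarrow> chi \<alpha> (G4 n) = chi \<alpha> (G5 n)" using f3_sign(3)[OF z(1), of \<alpha>] df by auto
    have m: "\<forall>E. tricyclic n E \<longrightarrow> chi \<alpha> E \<le> max (chi \<alpha> (G4 n)) (chi \<alpha> (G5 n))"
      using part4max[OF a n] by blast
    show "tricyclic n (G4 n) \<and> tricyclic n (G5 n)
            \<and> (\<forall>E. tricyclic n E \<longrightarrow> chi \<alpha> E \<le> max (chi \<alpha> (G4 n)) (chi \<alpha> (G5 n)))
            \<and> (1 < \<alpha> \<and> \<alpha> < 2 \<longrightarrow> chi \<alpha> (G4 n) < chi \<alpha> (G5 n))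
            \<and> (\<alpha> > 2 \<longrightarrow> chi \<alpha> (G4 n) > chi \<alpha> (G5 n))
            \<and> (\<alpha> = 1 \<or> \<alpha> = 2 \<longrightarrow> chi \<alpha> (G4 n) = chi \<alpha> (G5 n))"
      using G4_facts(1)[OF n] G5_facts(1)[OF n] m s1 s2 s3 by blast
  qed
  have q5: "\<forall>n\<ge>6. is_max \<alpha> (tetracyclic n) (H4 n)" using part5[OF a] by blast
  have q6: "is_max \<alpha> (tetracyclic 5) (H5 5)" using part6[OF a] .
  show ?thesis using q1 q2 q3 q4 q5 q6 by blast
qed

end
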